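(* Let $\mathfrak{R}$ be a root system in $\mathbb{R}^d$ (normalized so that $|\alpha|^2=2$ for all $\alpha\in\mathfrak{R}$) with positive subsystem $\mathfrak{R}_+$, let $G$ be the reflection group generated by $\{r_\alpha:\alpha\in\mathfrak{R}\}$, let $\kappa:\mathfrak{R}\to[0,\infty)$ be a $G$-invariant multiplicity function, and let $\lambda_\kappa=\sum_{\alpha\in\mathfrak{R}_+}\kappa_\alpha$. Let $(p_t)_{t>0}$ be the Dunkl heat kernel associated with the Dunkl Laplacian $\Delta_\kappa$. Suppose that $G$ is isomorphic to $\mathbb{Z}_2^d$. Then for every $t>0$ and every $x,y\in\mathbb{R}^d$, $$-\Delta_\kappa\big(\log p_t(\cdot,y)\big)(x)\leq \frac{d+2\lambda_\kappa}{2t}.$$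
   Context: $\langle\cdot,\cdot\rangle$ and $|\cdot|$ denote the Euclidean inner product and norm on $\mathbb{R}^d$. For $\alpha\in\mathbb{R}^d\setminus\{0\}$, $r_\alpha x=x-2\frac{\langle\alpha,x\rangle}{|\alpha|^2}\alpha$ is the reflection in the hyperplane $\alpha^\perp$. A root system $\mathfrak{R}$ is a finite set of nonzero vectors with $r_\alpha(\mathfrak{R})=\mathfrak{R}$ and $\alpha\mathbb{R}\cap\mathfrak{R}=\{\alpha,-\alpha\}$ for all $\alpha\in\mathfrak{R}$; a positive subsystem $\mathfrak{R}_+$ is a subset with $\mathfrak{R}=\mathfrak{R}_+\sqcup(-\mathfrak{R}_+)$. The multiplicity function satisfies $\kappa_{g\alpha}=\kappa_\alpha$ for $g\in G$. For $\xi\in\mathbb{R}^d$ the Dunkl operator is $\mathcal{D}_\xi f(x)=\partial_\xi f(x)+\sum_{\alpha\in\mathfrak{R}_+}\kappa_\alpha\langle\alpha,\xi\rangle\frac{f(x)-f(r_\alpha x)}{\langle\alpha,x\rangle}$ for $f\in C^1(\mathbb{R}^d)$; with $\mathcal{D}_i=\mathcal{D}_{e_i}$ for the standard basis, the Dunkl Laplacian is $\Delta_\kappa=\sum_{i=1}^d\mathcal{D}_i^2$, which equals $\Delta_\kappa f(x)=\Delta f(x)+2\sum_{\alpha\in\mathfrak{R}_+}\kappa_\alpha\Big[\frac{\langle\alpha,\nabla f(x)\rangle}{\langle\alpha,x\rangle}-\frac{f(x)-f(r_\alpha x)}{\langle\alpha,x\rangle^2}\Big]$ for $f\in C^2(\mathbb{R}^d)$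 (with $\Delta,\nabla$ the usual Laplacian and gradient; expressions are understood off the reflecting hyperplanes and by continuity on them). Let $\omega_\kappa(x)=\prod_{\alpha\in\mathfrak{R}_+}|\langle\alpha,x\rangle|^{\kappa_\alpha}$ and $\mu_\kappa(dx)=\omega_\kappa(x)\,dx$. The Dunkl heat kernel $p_t(x,y)$ is the integral kernel with respect to $\mu_\kappa$ of the Dunkl heat semigroup $P_t=e^{t\Delta_\kappa}$, i.e. $P_tf(x)=\int_{\mathbb{R}^d}f(y)p_t(x,y)\,\mu_\kappa(dy)$; it is a smooth, strictly positive, symmetric function of $(t,x,y)$ satisfying $\partial_t p_t(x,y)=\Delta_\kappa(p_t(\cdot,y))(x)$. The expression $\Delta_\kappa(\log p_t(\cdot,y))(x)$ means $\Delta_\kappa$ applied to the function $z\mapsto\log p_t(z,y)$, evaluated at $x$. *)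

theory Defs
  imports "HOL-Analysis.Analysis" "HOL-Algebra.Product_Groups" "HOL-Algebra.Elementary_Groups"
begin

definition refl :: "'a::euclidean_space \<Rightarrow> 'a \<Rightarrow> 'a" where
  "refl \<alpha> x = x - (2 * (\<alpha> \<bullet> x) / (norm \<alpha>)\<^sup>2) *\<^sub>R \<alpha>"

definition root_system :: "'a::euclidean_space set \<Rightarrow> bool" where
  "root_system R \<longleftrightarrow> finite R \<and> 0 \<notin> R \<and>
     (\<forall>\<alpha>\<in>R. refl \<alpha> ` R = R) \<and>
     (\<forall>\<alpha>\<in>R. \<forall>c::real. c *\<^sub>R \<alpha> \<in> R \<longleftrightarrow> c = 1 \<or> c = -1)"

definition positive_subsystem :: "'a::euclidean_space set \<Rightarrow> 'a set \<Rightarrow> bool" where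
  "positive_subsystem R Rp \<longleftrightarrow> Rp \<subseteq> R \<and> R = Rp \<union> uminus ` Rp \<and> Rp \<inter> uminus ` Rp = {}"

inductive_set refl_group_set :: "'a::euclidean_space set \<Rightarrow> ('a \<Rightarrow> 'a) set" for R where
  id_in: "id \<in> refl_group_set R"
| step: "\<alpha> \<in> R \<Longrightarrow> g \<in> refl_group_set R \<Longrightarrow> refl \<alpha> \<circ> g \<in> refl_group_set R"

definition refl_group :: "'a::euclidean_space set \<Rightarrow> ('a \<Rightarrow> 'a) monoid" where
  "refl_group R = \<lparr>carrier = refl_group_set R, monoid.mult = (\<circ>), one = id\<rparr>"

definition Z2_pow :: "nat \<Rightarrow> (nat \<Rightarrow> int) monoid" where
  "Z2_pow d = product_group {..<d} (\<lambda>_. integer_mod_group 2)"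

definition multiplicity_function :: "'a::euclidean_space set \<Rightarrow> ('a \<Rightarrow> real) \<Rightarrow> bool" where
  "multiplicity_function R \<kappa> \<longleftrightarrow> (\<forall>\<alpha>\<in>R. \<kappa> \<alpha> \<ge> 0) \<and>
     (\<forall>g\<in>refl_group_set R. \<forall>\<alpha>\<in>R. \<kappa> (g \<alpha>) = \<kappa> \<alpha>)"

definition lambda_k :: "'a::euclidean_space set \<Rightarrow> ('a \<Rightarrow> real) \<Rightarrow> real" where
  "lambda_k Rp \<kappa> = (\<Sum>\<alpha>\<in>Rp. \<kappa> \<alpha>)"

definition regular_set :: "'a::euclidean_space set \<Rightarrow> 'a set" where
  "regular_set Rp = {x. \<forall>\<alpha>\<in>Rp. \<alpha> \<bullet> x \<noteq> 0}"

definition dunkl_op :: "'a::euclidean_space set \<Rightarrow> ('a \<Rightarrow> real) \<Rightarrow> 'a \<Rightarrow> ('a \<Rightarrow> real) \<Rightarrow> 'a \<Rightarrow> real" where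
  "dunkl_op Rp \<kappa> \<xi> f x = frechet_derivative f (at x) \<xi> +
     (\<Sum>\<alpha>\<in>Rp. \<kappa> \<alpha> * (\<alpha> \<bullet> \<xi>) * (f x - f (refl \<alpha> x)) / (\<alpha> \<bullet> x))"

definition C1_fun :: "('a::euclidean_space \<Rightarrow> real) \<Rightarrow> bool" where
  "C1_fun f \<longleftrightarrow> (\<forall>x. f differentiable (at x)) \<and>
     (\<forall>v. continuous_on UNIV (\<lambda>x. frechet_derivative f (at x) v))"

definition dunkl_kernel :: "'a::euclidean_space set \<Rightarrow> ('a \<Rightarrow> real) \<Rightarrow> 'a \<Rightarrow> 'a \<Rightarrow> real" where
  "dunkl_kernel Rp \<kappa> = (THE E. \<forall>y. C1_fun (\<lambda>x. E x y) \<and> E 0 y = 1 \<and>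
      (\<forall>\<xi>. \<forall>x\<in>regular_set Rp. dunkl_op Rp \<kappa> \<xi> (\<lambda>z. E z y) x = (\<xi> \<bullet> y) * E x y))"

definition dunkl_weight :: "'a::euclidean_space set \<Rightarrow> ('a \<Rightarrow> real) \<Rightarrow> 'a \<Rightarrow> real" where
  "dunkl_weight Rp \<kappa> x = (\<Prod>\<alpha>\<in>Rp. \<bar>\<alpha> \<bullet> x\<bar> powr (2 * \<kappa> \<alpha>))"

definition macdonald_const :: "'a::euclidean_space set \<Rightarrow> ('a \<Rightarrow> real) \<Rightarrow> real" where
  "macdonald_const Rp \<kappa> = integral UNIV (\<lambda>x::'a. exp (- (norm x)\<^sup>2 / 2) * dunkl_weight Rp \<kappa> x)"

text \<open>Dunkl heat kernel (Roesler):
  p_t(x,y) = c^{-1} (2t)^{-d/2-lambda} exp(-(|x|^2+|y|^2)/(4t)) E(x/sqrt(2t), y/sqrt(2t)).\<close>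
definition dunkl_heat_kernel :: "'a::euclidean_space set \<Rightarrow> ('a \<Rightarrow> real) \<Rightarrow> real \<Rightarrow> 'a \<Rightarrow> 'a \<Rightarrow> real" where
  "dunkl_heat_kernel Rp \<kappa> t x y =
     (2 * t) powr (- (real DIM('a) / 2 + lambda_k Rp \<kappa>)) / macdonald_const Rp \<kappa> *
     exp (- ((norm x)\<^sup>2 + (norm y)\<^sup>2) / (4 * t)) *
     dunkl_kernel Rp \<kappa> (x /\<^sub>R sqrt (2 * t)) (y /\<^sub>R sqrt (2 * t))"

definition grad :: "('a::euclidean_space \<Rightarrow> real) \<Rightarrow> 'a \<Rightarrow> 'a" where
  "grad f x = (\<Sum>i\<in>Basis. frechet_derivative f (at x) i *\<^sub>R i)"

definition laplacian :: "('a::euclidean_space \<Rightarrow> real) \<Rightarrow> 'a \<Rightarrow> real" where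
  "laplacian f x = (\<Sum>i\<in>Basis. frechet_derivative (\<lambda>z. frechet_derivative f (at z) i) (at x) i)"

definition dunkl_laplacian_raw :: "'a::euclidean_space set \<Rightarrow> ('a \<Rightarrow> real) \<Rightarrow> ('a \<Rightarrow> real) \<Rightarrow> 'a \<Rightarrow> real" where
  "dunkl_laplacian_raw Rp \<kappa> f x = laplacian f x +
     2 * (\<Sum>\<alpha>\<in>Rp. \<kappa> \<alpha> * ((\<alpha> \<bullet> grad f x) / (\<alpha> \<bullet> x) - (f x - f (refl \<alpha> x)) / (\<alpha> \<bullet> x)\<^sup>2))"

definition dunkl_laplacian :: "'a::euclidean_space set \<Rightarrow> ('a \<Rightarrow> real) \<Rightarrow> ('a \<Rightarrow> real) \<Rightarrow> 'a \<Rightarrow> real" where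
  "dunkl_laplacian Rp \<kappa> f x =
     (if x \<in> regular_set Rp then dunkl_laplacian_raw Rp \<kappa> f x
      else Lim (at x within regular_set Rp) (dunkl_laplacian_raw Rp \<kappa> f))"

end

theory Submission
  imports Defs
begin


fun dk_coef :: "real \<Rightarrow> nat \<Rightarrow> real" where
  "dk_coef k 0 = 1"
| "dk_coef k (Suc n) = dk_coef k n / (real (Suc n) + (if odd (Suc n) then 2 * k else 0))"

definition dkF :: "real \<Rightarrow> real \<Rightarrow> real" where
  "dkF k z = (\<Sum>n. dk_coef k n * z ^ n)"
definition dkF1 :: "real \<Rightarrow> real \<Rightarrow> real" where
  "dkF1 k z = (\<Sum>n. diffs (dk_coef k) n * z ^ n)"
definition dkF2 :: "real \<Rightarrow> real \<Rightarrow> real" where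
  "dkF2 k z = (\<Sum>n. diffs (diffs (dk_coef k)) n * z ^ n)"

lemma dk_coef_pos: "k \<ge> 0 \<Longrightarrow> 0 < dk_coef k n"
  by (induction n) (auto intro!: divide_pos_pos add_pos_nonneg)

lemma dk_coef_le: "k \<ge> 0 \<Longrightarrow> dk_coef k n \<le> 1 / fact n"
proof (induction n)
  case 0 then show ?case by simp
next
  case (Suc n)
  have p: "0 < dk_coef k n" using dk_coef_pos Suc.prems by blast
  have "dk_coef k (Suc n) \<le> dk_coef k n / real (Suc n)"
    using Suc.prems p by (auto intro!: divide_left_mono)
  also have "\<dots> \<le> (1 / fact n) / real (Suc n)"
    using divide_right_mono[OF Suc.IH[OF Suc.prems], of "real (Suc n)"] by simp
  also have "\<dots> = 1 / fact (Suc n)" by (simp add: field_simps)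
  finally show ?case .
qed

lemma dk_summable:
  assumes "k \<ge> 0" shows "summable (\<lambda>n. dk_coef k n * z ^ n)"
proof (rule summable_comparison_test')
  show "summable (\<lambda>n. \<bar>z\<bar> ^ n / fact n)" using summable_exp[of "\<bar>z\<bar>"] by (simp add: divide_inverse mult.commute)
  fix n
  have "norm (dk_coef k n * z ^ n) = dk_coef k n * \<bar>z\<bar> ^ n"
    using dk_coef_pos[OF assms, of n] by (simp add: abs_mult power_abs)
  also have "\<dots> \<le> (1 / fact n) * \<bar>z\<bar> ^ n"
    by (rule mult_right_mono[OF dk_coef_le[OF assms]]) simp
  finally show "norm (dk_coef k n * z ^ n) \<le> \<bar>z\<bar> ^ n / fact n" by simp
qed

lemma dk_summable1: "k \<ge> 0 \<Longrightarrow> summable (\<lambda>n. diffs (dk_coef k) n * z ^ n)"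
  by (rule termdiff_converges_all) (rule dk_summable)

lemma dk_summable2: "k \<ge> 0 \<Longrightarrow> summable (\<lambda>n. diffs (diffs (dk_coef k)) n * z ^ n)"
  by (rule termdiff_converges_all) (rule dk_summable1)

lemma dkF_deriv: "k \<ge> 0 \<Longrightarrow> (dkF k has_real_derivative dkF1 k z) (at z)"
  unfolding dkF_def[abs_def] dkF1_def
  by (rule termdiffs_strong_converges_everywhere) (rule dk_summable)

lemma dkF1_deriv: "k \<ge> 0 \<Longrightarrow> (dkF1 k has_real_derivative dkF2 k z) (at z)"
  unfolding dkF1_def[abs_def] dkF2_def
  by (rule termdiffs_strong_converges_everywhere) (rule dk_summable1)

lemma dkF_0: "dkF k 0 = 1"
  unfolding dkF_def by (subst suminf_finite[of "{0}"]) auto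

lemma dkF1_0: "dkF1 k 0 = dk_coef k 1"
  unfolding dkF1_def by (subst suminf_finite[of "{0}"]) (auto simp: diffs_def)

lemma dk_coef_rec: "dk_coef k (Suc n) * (real (Suc n) + (if odd (Suc n) then 2 * k else 0)) = dk_coef k n"
  if "k \<ge> 0"
proof -
  have "real (Suc n) + (if odd (Suc n) then 2 * k else 0) > 0" using that by auto
  then show ?thesis by simp
qed

lemma dk_ode:
  assumes k: "k \<ge> 0"
  shows "z * dkF1 k z + k * (dkF k z - dkF k (-z)) = z * dkF k z"
proof -
  let ?a = "dk_coef k"
  have s0: "summable (\<lambda>n. ?a n * z ^ n)" "summable (\<lambda>n. ?a n * (-z) ^ n)"
    using dk_summable[OF k] by auto
  have s1: "summable (\<lambda>n. diffs ?a n * z ^ n)" using dk_summable1[OF k] .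
  have A: "z * dkF1 k z = (\<Sum>n. real (Suc n) * ?a (Suc n) * z ^ Suc n)"
    unfolding dkF1_def using s1
    by (subst suminf_mult[symmetric]) (auto simp: diffs_def mult_ac)
  have sd: "summable (\<lambda>n. ?a n * z ^ n - ?a n * (-z) ^ n)"
    using s0 by (rule summable_diff)
  have B0: "dkF k z - dkF k (-z) = (\<Sum>n. ?a n * z ^ n - ?a n * (-z) ^ n)"
    unfolding dkF_def using s0 by (simp add: suminf_diff)
  have B: "dkF k z - dkF k (-z) = (\<Sum>n. ?a (Suc n) * z ^ Suc n - ?a (Suc n) * (-z) ^ Suc n)"
    unfolding B0 using suminf_split_head[OF sd] by simp
  have C: "z * dkF k z = (\<Sum>n. ?a n * z ^ Suc n)"
    unfolding dkF_def using s0 by (subst suminf_mult[symmetric]) (auto simp: mult_ac)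
  have sA: "summable (\<lambda>n. real (Suc n) * ?a (Suc n) * z ^ Suc n)"
    using summable_mult[OF s1, of z] by (simp add: diffs_def mult_ac)
  have sB: "summable (\<lambda>n. ?a (Suc n) * z ^ Suc n - ?a (Suc n) * (-z) ^ Suc n)"
    using sd by (subst summable_Suc_iff)
  have "z * dkF1 k z + k * (dkF k z - dkF k (-z)) =
     (\<Sum>n. real (Suc n) * ?a (Suc n) * z ^ Suc n + k * (?a (Suc n) * z ^ Suc n - ?a (Suc n) * (-z) ^ Suc n))"
    unfolding A B using suminf_mult[OF sB, of k] suminf_add[OF sA summable_mult[OF sB, of k]]
    by simp
  also have "\<dots> = (\<Sum>n. ?a n * z ^ Suc n)"
  proof (rule suminf_cong)
    fix n
    have "(-z) ^ Suc n = (if odd (Suc n) then - (z ^ Suc n) else z ^ Suc n)"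
      by (simp add: power_minus')
    then have "real (Suc n) * ?a (Suc n) * z ^ Suc n + k * (?a (Suc n) * z ^ Suc n - ?a (Suc n) * (-z) ^ Suc n)
       = (?a (Suc n) * (real (Suc n) + (if odd (Suc n) then 2 * k else 0))) * z ^ Suc n"
      by (cases "odd (Suc n)") (simp_all add: algebra_simps del: dk_coef.simps power_Suc)
    also have "\<dots> = ?a n * z ^ Suc n" using dk_coef_rec[OF k, of n] by (simp del: dk_coef.simps)
    finally show "real (Suc n) * ?a (Suc n) * z ^ Suc n + k * (?a (Suc n) * z ^ Suc n - ?a (Suc n) * (-z) ^ Suc n) = ?a n * z ^ Suc n" .
  qed
  finally show ?thesis using C by simp
qed


definition dkE :: "real \<Rightarrow> real \<Rightarrow> real" where "dkE k z = (dkF k z + dkF k (-z)) / 2"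
definition dkO :: "real \<Rightarrow> real \<Rightarrow> real" where "dkO k z = (dkF k z - dkF k (-z)) / 2"

lemma dkE_even: "dkE k (-z) = dkE k z" by (simp add: dkE_def)
lemma dkO_odd: "dkO k (-z) = - dkO k z" by (simp add: dkO_def diff_divide_distrib)
lemma dkF_EO: "dkF k z = dkE k z + dkO k z" by (simp add: dkE_def dkO_def field_simps)
lemma dkF_EO_neg: "dkF k (-z) = dkE k z - dkO k z" by (simp add: dkE_def dkO_def field_simps)
lemma dkE_0: "dkE k 0 = 1" by (simp add: dkE_def dkF_0)
lemma dkO_0: "dkO k 0 = 0" by (simp add: dkO_def)

context
  fixes k :: real assumes k: "k \<ge> 0"
begin

lemma dkF_neg_deriv: "((\<lambda>z. dkF k (-z)) has_real_derivative - dkF1 k (-z)) (at z)"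
  using DERIV_chain2[OF dkF_deriv[OF k] DERIV_minus[OF DERIV_ident]] by simp

lemma dkF1_neg_deriv: "((\<lambda>z. dkF1 k (-z)) has_real_derivative - dkF2 k (-z)) (at z)"
  using DERIV_chain2[OF dkF1_deriv[OF k] DERIV_minus[OF DERIV_ident]] by simp

lemma dkE_deriv0: "(dkE k has_real_derivative (dkF1 k z - dkF1 k (-z)) / 2) (at z)"
  unfolding dkE_def[abs_def]
  using DERIV_add[OF dkF_deriv[OF k] dkF_neg_deriv, THEN DERIV_cdivide[where c=2]] by simp

lemma dkO_deriv0: "(dkO k has_real_derivative (dkF1 k z + dkF1 k (-z)) / 2) (at z)"
  unfolding dkO_def[abs_def]
  using DERIV_diff[OF dkF_deriv[OF k] dkF_neg_deriv, THEN DERIV_cdivide[where c=2]] by simp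

lemma dkF1_formula: "z \<noteq> 0 \<Longrightarrow> dkF1 k z = dkF k z - 2 * k * dkO k z / z"
  using dk_ode[OF k, of z] by (simp add: dkO_def field_simps)

lemma dkE_deriv: "(dkE k has_real_derivative dkO k z) (at z)"
proof -
  have "(dkF1 k z - dkF1 k (-z)) / 2 = dkO k z"
  proof (cases "z = 0")
    case True then show ?thesis by (simp add: dkO_0)
  next
    case False
    have "z * (dkF1 k z - dkF1 k (-z) - (dkF k z - dkF k (-z))) = 0"
      using dk_ode[OF k, of z] dk_ode[OF k, of "-z"] by (simp add: algebra_simps)
    then have "dkF1 k z - dkF1 k (-z) = dkF k z - dkF k (-z)" using False by simp
    then show ?thesis by (simp add: dkO_def)
  qed
  then show ?thesis using dkE_deriv0[of z] by simp
qed

lemma dkO_deriv_formula: assumes z: "z \<noteq> 0" shows "(dkF1 k z + dkF1 k (-z)) / 2 = dkE k z - 2 * k * dkO k z / z"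
proof -
  have "z * (dkF1 k z + dkF1 k (-z)) = z * (dkF k z + dkF k (-z)) - 2 * k * (dkF k z - dkF k (-z))"
    using dk_ode[OF k, of z] dk_ode[OF k, of "-z"] by (simp add: algebra_simps)
  then show ?thesis using z by (simp add: dkO_def dkE_def field_simps)
qed

lemma dkF1_0_le: "dkF1 k 0 \<le> 1"
  using k by (simp add: dkF1_0 numeral_eq_Suc)

lemma dkO_deriv: "z \<noteq> 0 \<Longrightarrow> (dkO k has_real_derivative dkE k z - 2 * k * dkO k z / z) (at z)"
  using dkO_deriv0[of z] dkO_deriv_formula[of z] by simp

lemma dkE_ge1: "dkE k z \<ge> 1"
proof -
  let ?f = "\<lambda>n. dk_coef k n * z ^ n + dk_coef k n * (-z) ^ n"
  have s: "summable ?f" using dk_summable[OF k, of z] dk_summable[OF k, of "-z"] by (rule summable_add)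
  have nn: "0 \<le> ?f n" for n
  proof -
    have "0 \<le> z ^ n + (-z) ^ n" by (cases "even n") (auto simp: power_minus')
    then have "0 \<le> dk_coef k n * (z ^ n + (-z) ^ n)" using dk_coef_pos[OF k, of n] by simp
    then show ?thesis by (simp add: algebra_simps)
  qed
  have "sum ?f {0} \<le> suminf ?f" by (rule sum_le_suminf[OF s]) (use nn in auto)
  also have "suminf ?f = dkF k z + dkF k (-z)"
    unfolding dkF_def using dk_summable[OF k, of z] dk_summable[OF k, of "-z"] by (simp add: suminf_add)
  finally show ?thesis by (simp add: dkE_def)
qed

lemma dkO_nonneg: "t \<ge> 0 \<Longrightarrow> dkO k t \<ge> 0"
proof -
  assume t: "t \<ge> 0"
  let ?f = "\<lambda>n. dk_coef k n * t ^ n - dk_coef k n * (-t) ^ n"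
  have nn: "0 \<le> ?f n" for n
  proof -
    have "0 \<le> t ^ n - (-t) ^ n" using t by (cases "even n") (auto simp: power_minus')
    then have "0 \<le> dk_coef k n * (t ^ n - (-t) ^ n)" using dk_coef_pos[OF k, of n] by simp
    then show ?thesis by (simp add: algebra_simps)
  qed
  have "0 \<le> suminf ?f" by (rule suminf_nonneg) (use dk_summable[OF k, of t] dk_summable[OF k, of "-t"] nn in \<open>auto intro: summable_diff\<close>)
  also have "suminf ?f = dkF k t - dkF k (-t)"
    unfolding dkF_def using dk_summable[OF k, of t] dk_summable[OF k, of "-t"] by (simp add: suminf_diff)
  finally show ?thesis by (simp add: dkO_def)
qed

lemma dkEO_pos: assumes t: "t \<ge> 0" shows "exp (-t) \<le> dkE k t - dkO k t"
proof -
  define h where "h s = exp s * (dkE k s - dkO k s)" for s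
  have hd: "(h has_real_derivative exp s * (dkE k s - dkO k s) + exp s * (dkO k s - (dkF1 k s + dkF1 k (-s)) / 2)) (at s)" for s
    unfolding h_def[abs_def] by (auto intro!: derivative_eq_intros dkE_deriv dkO_deriv0)
  have "h 0 \<le> h t"
  proof (rule DERIV_nonneg_imp_nondecreasing[OF t])
    fix s assume s: "0 \<le> s" "s \<le> t"
    show "\<exists>y. (h has_real_derivative y) (at s) \<and> 0 \<le> y"
    proof (cases "s = 0")
      case True
      then show ?thesis using hd[of s] dkF1_0_le by (auto simp: dkE_0 dkO_0 dkE_def dkF_0)
    next
      case False
      then have s0: "s > 0" using s by simp
      have "exp s * (dkE k s - dkO k s) + exp s * (dkO k s - (dkF1 k s + dkF1 k (-s)) / 2)
          = exp s * (2 * k * dkO k s / s)"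
      proof -
        have E0: "(dkF1 k s + dkF1 k (-s)) / 2 = dkE k s - 2 * k * dkO k s / s"
          by (rule dkO_deriv_formula) (use s0 in simp)
        have E: "dkE k s = (dkF1 k s + dkF1 k (-s)) / 2 + 2 * k * dkO k s / s" using E0 by linarith
        show ?thesis unfolding E using s0 by (simp add: field_simps)
      qed
      moreover have "0 \<le> exp s * (2 * k * dkO k s / s)"
        using k dkO_nonneg[of s] s0 by simp
      ultimately show ?thesis using hd[of s] by metis
    qed
  qed
  then have "1 \<le> exp t * (dkE k t - dkO k t)" by (simp add: h_def dkE_0 dkO_0)
  then show ?thesis by (simp add: exp_minus field_simps)
qed

lemma dkF_pos: "dkF k z > 0"
proof (cases "z \<ge> 0")
  case True
  then show ?thesis using dkE_ge1[of z] dkO_nonneg[of z] dkF_EO[of k z] by simp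
next
  case False
  have "exp (-(-z)) \<le> dkE k (-z) - dkO k (-z)" using False dkEO_pos[of "-z"] by simp
  moreover have "dkF k z = dkE k (-z) - dkO k (-z)" using dkF_EO_neg[of k "-z"] by simp
  moreover have "exp (-(-z)) > 0" by simp
  ultimately show ?thesis by linarith
qed

end


lemma nonneg_from_right0:
  fixes g g' :: "real \<Rightarrow> real"
  assumes lim: "(g \<longlongrightarrow> 0) (at_right 0)"
    and d: "\<And>s. 0 < s \<Longrightarrow> (g has_real_derivative g' s) (at s)"
    and nn: "\<And>s. 0 < s \<Longrightarrow> g' s \<ge> 0"
    and t: "t > 0"
  shows "g t \<ge> 0"
proof -
  have "\<forall>\<^sub>F s in at_right 0. g s \<le> g t"
  proof -
    have "\<forall>\<^sub>F s in at_right 0. 0 < s \<and> s < t"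
      using t by (simp add: eventually_at_right_field) (metis less_eq_real_def)
    then show ?thesis
    proof (rule eventually_mono)
      fix s assume s: "0 < s \<and> s < t"
      show "g s \<le> g t"
      proof (rule DERIV_nonneg_imp_nondecreasing[of s t g])
        show "s \<le> t" using s by simp
        fix x assume "s \<le> x" "x \<le> t"
        then show "\<exists>y. (g has_real_derivative y) (at x) \<and> 0 \<le> y" using d[of x] nn[of x] s by auto
      qed
    qed
  qed
  from tendsto_upperbound[OF lim this] show ?thesis by simp
qed

lemma powr_minus_one_div: "s > 0 \<Longrightarrow> (s::real) powr (a - 1) = s powr a / s"
  by (simp add: powr_diff)

context
  fixes k :: real assumes k: "k \<ge> 0"
begin

lemma dkO_div_lim: "((\<lambda>s. dkO k s / s) \<longlongrightarrow> dkF1 k 0) (at 0)"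
proof -
  have "((\<lambda>y. (dkO k y - dkO k 0) / (y - 0)) \<longlongrightarrow> (dkF1 k 0 + dkF1 k (-0)) / 2) (at 0)"
    using dkO_deriv0[OF k, of 0] by (simp only: has_field_derivative_iff)
  then show ?thesis by (simp add: dkO_0)
qed

lemma isCont_dkE: "isCont (dkE k) z" using dkE_deriv[OF k] by (rule DERIV_isCont)
lemma isCont_dkO: "isCont (dkO k) z" using dkO_deriv0[OF k] by (rule DERIV_isCont)
lemma isCont_dkF: "isCont (dkF k) z" using dkF_deriv[OF k] by (rule DERIV_isCont)
lemma isCont_dkF1: "isCont (dkF1 k) z" using dkF1_deriv[OF k] by (rule DERIV_isCont)

lemma dk_kk:
  assumes kp: "k > 0" and t: "t > 0"
  shows "(k + t) * dkO k t \<le> t * dkE k t"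
proof -
  define g where "g s = s powr (k - 1) * exp s * (s * dkE k s - (k + s) * dkO k s)" for s
  define g' where "g' s = s powr (k - 1) * exp s * (k * (1 + k) * dkO k s / s)" for s
  have d: "(g has_real_derivative g' s) (at s)" if s: "0 < s" for s
  proof -
    have D1: "((\<lambda>s. s powr (k - 1)) has_real_derivative (k - 1) * s powr (k - 1 - 1)) (at s)"
      using has_real_derivative_powr[OF s] .
    have DO: "(dkO k has_real_derivative dkE k s - 2 * k * dkO k s / s) (at s)"
      using dkO_deriv[OF k] s by simp
    have "(g has_real_derivative
        (k - 1) * s powr (k - 1 - 1) * exp s * (s * dkE k s - (k + s) * dkO k s)
        + s powr (k - 1) * exp s * (s * dkE k s - (k + s) * dkO k s)
        + s powr (k - 1) * exp s * (dkE k s + s * dkO k s - dkO k s - (k + s) * (dkE k s - 2 * k * dkO k s / s))) (at s)"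
      unfolding g_def[abs_def]
      by (auto intro!: derivative_eq_intros D1 dkE_deriv[OF k] DO simp: s field_simps)
    moreover have "(k - 1) * s powr (k - 1 - 1) * exp s * (s * dkE k s - (k + s) * dkO k s)
        + s powr (k - 1) * exp s * (s * dkE k s - (k + s) * dkO k s)
        + s powr (k - 1) * exp s * (dkE k s + s * dkO k s - dkO k s - (k + s) * (dkE k s - 2 * k * dkO k s / s)) = g' s"
      unfolding g'_def powr_minus_one_div[OF s, of "k - 1"] using s
      by (simp add: field_simps)
    ultimately show ?thesis by simp
  qed
  have nn: "g' s \<ge> 0" if "0 < s" for s
    unfolding g'_def using that k dkO_nonneg[OF k, of s] by simp
  have lim: "(g \<longlongrightarrow> 0) (at_right 0)"
  proof -
    have ev: "\<forall>\<^sub>F s in at_right 0. s powr k * exp s * (dkE k s - (k + s) * (dkO k s / s)) = g s"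
    proof -
      have "\<forall>\<^sub>F s in at_right (0::real). 0 < s" by (simp add: eventually_at_right_less)
      then show ?thesis
      proof (rule eventually_mono)
        fix s :: real assume s: "0 < s"
        have "s powr k = s powr (k - 1) * s" using powr_minus_one_div[OF s, of k] s by simp
        then show "s powr k * exp s * (dkE k s - (k + s) * (dkO k s / s)) = g s"
          unfolding g_def using s by (simp add: field_simps)
      qed
    qed
    have l1: "((\<lambda>s. s powr k) \<longlongrightarrow> 0) (at_right 0)"
    proof (rule tendsto_zero_powrI[where b=k])
      show "\<forall>\<^sub>F x in at_right 0. 0 \<le> (x::real)"
        using eventually_at_right_less[of "0::real"] by (rule eventually_mono) simp
    qed (auto simp: kp intro!: tendsto_ident_at)
    have l2: "((\<lambda>s. exp s * (dkE k s - (k + s) * (dkO k s / s))) \<longlongrightarrow> exp 0 * (dkE k 0 - (k + 0) * dkF1 k 0)) (at_right 0)"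
    proof -
      have a: "(dkE k \<longlongrightarrow> dkE k 0) (at_right 0)" using isCont_dkE[of 0] by (simp add: isCont_def filterlim_at_split)
      have b: "((\<lambda>s. dkO k s / s) \<longlongrightarrow> dkF1 k 0) (at_right 0)" using dkO_div_lim by (simp add: filterlim_at_split)
      show ?thesis
        by (rule tendsto_mult[OF tendsto_exp[OF tendsto_ident_at] tendsto_diff[OF a tendsto_mult[OF tendsto_add[OF tendsto_const tendsto_ident_at] b]]])
    qed
    have "((\<lambda>s. s powr k * (exp s * (dkE k s - (k + s) * (dkO k s / s)))) \<longlongrightarrow> 0 * (exp 0 * (dkE k 0 - (k + 0) * dkF1 k 0))) (at_right 0)"
      by (rule tendsto_mult[OF l1 l2])
    then have "((\<lambda>s. s powr k * exp s * (dkE k s - (k + s) * (dkO k s / s))) \<longlongrightarrow> 0) (at_right 0)"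
      by (simp add: mult.assoc)
    then show ?thesis using tendsto_cong[OF ev] by simp
  qed
  have "g t \<ge> 0" by (rule nonneg_from_right0[OF lim d nn t])
  moreover have "t powr (k - 1) * exp t > 0" using t by simp
  ultimately have "0 \<le> t * dkE k t - (k + t) * dkO k t"
    unfolding g_def using t by (simp add: zero_le_mult_iff)
  then show ?thesis by simp
qed

end


definition dkN :: "real \<Rightarrow> real \<Rightarrow> real" where
  "dkN k z = dkO k z * (dkE k z * (1 + 2 * k) + dkO k z) - z * (dkE k z ^ 2 - dkO k z ^ 2)"

definition dkF3 :: "real \<Rightarrow> real \<Rightarrow> real" where
  "dkF3 k z = (\<Sum>n. diffs (diffs (diffs (dk_coef k))) n * z ^ n)"

definition dkG :: "real \<Rightarrow> real \<Rightarrow> real" where "dkG k z = ln (dkF k z)"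
definition dkG1 :: "real \<Rightarrow> real \<Rightarrow> real" where "dkG1 k z = dkF1 k z / dkF k z"
definition dkG2 :: "real \<Rightarrow> real \<Rightarrow> real" where
  "dkG2 k z = (dkF2 k z * dkF k z - dkF1 k z ^ 2) / dkF k z ^ 2"
definition dkT :: "real \<Rightarrow> real \<Rightarrow> real" where
  "dkT k z = dkG2 k z + k * (2 * dkG1 k z / z - (dkG k z - dkG k (-z)) / z ^ 2)"
definition dkTh :: "real \<Rightarrow> real \<Rightarrow> real" where
  "dkTh k z = (if z = 0 then (1 + 2 * k) * dkG2 k 0 else dkT k z)"

context
  fixes k :: real assumes k: "k \<ge> 0"
begin

lemma dkF2_deriv: "(dkF2 k has_real_derivative dkF3 k z) (at z)"
  unfolding dkF2_def[abs_def] dkF3_def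
  by (rule termdiffs_strong_converges_everywhere) (rule dk_summable2[OF k])

lemma isCont_dkF2: "isCont (dkF2 k) z" using dkF2_deriv by (rule DERIV_isCont)

lemma isCont_dkN: "isCont (dkN k) z"
  unfolding dkN_def[abs_def] using isCont_dkE[OF k] isCont_dkO[OF k]
  by (auto intro!: continuous_intros)

lemma dkN_0: "dkN k 0 = 0" by (simp add: dkN_def dkO_0)

lemma dkN_pos_side:
  assumes kp: "k > 0" and t: "t > 0"
  shows "dkN k t \<ge> 0"
proof -
  define g where "g s = s powr (2 * k) * dkN k s" for s
  define g' where "g' s = s powr (2 * k) * (2 * dkO k s / s * (s * (dkE k s + dkO k s) - k * dkO k s))" for s
  have d: "(g has_real_derivative g' s) (at s)" if s: "0 < s" for s
  proof -
    have D1: "((\<lambda>s. s powr (2 * k)) has_real_derivative (2 * k) * s powr (2 * k - 1)) (at s)"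
      using has_real_derivative_powr[OF s] .
    have DO: "(dkO k has_real_derivative dkE k s - 2 * k * dkO k s / s) (at s)"
      using dkO_deriv[OF k] s by simp
    have "(g has_real_derivative
        (2 * k) * s powr (2 * k - 1) * dkN k s
        + s powr (2 * k) * ((dkE k s - 2 * k * dkO k s / s) * (dkE k s * (1 + 2 * k) + dkO k s)
             + dkO k s * (dkO k s * (1 + 2 * k) + (dkE k s - 2 * k * dkO k s / s))
             - (dkE k s ^ 2 - dkO k s ^ 2)
             - s * (2 * dkE k s * dkO k s - 2 * dkO k s * (dkE k s - 2 * k * dkO k s / s)))) (at s)"
      unfolding g_def[abs_def] dkN_def
      by (rule derivative_eq_intros D1 dkE_deriv[OF k] DO refl | simp)+
    moreover have "(2 * k) * s powr (2 * k - 1) * dkN k s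
        + s powr (2 * k) * ((dkE k s - 2 * k * dkO k s / s) * (dkE k s * (1 + 2 * k) + dkO k s)
             + dkO k s * (dkO k s * (1 + 2 * k) + (dkE k s - 2 * k * dkO k s / s))
             - (dkE k s ^ 2 - dkO k s ^ 2)
             - s * (2 * dkE k s * dkO k s - 2 * dkO k s * (dkE k s - 2 * k * dkO k s / s))) = g' s"
      unfolding g'_def dkN_def powr_minus_one_div[OF s, of "2 * k"] using s
      by (simp add: field_simps power2_eq_square)
    ultimately show ?thesis by simp
  qed
  have nn: "g' s \<ge> 0" if s: "0 < s" for s
  proof -
    have "(k + s) * dkO k s \<le> s * dkE k s" by (rule dk_kk[OF k kp s])
    moreover have "dkO k s \<ge> 0" using dkO_nonneg[OF k] s by simp
    ultimately have "s * (dkE k s + dkO k s) - k * dkO k s \<ge> 0" using s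
      by (simp add: algebra_simps) (smt (verit) mult_nonneg_nonneg)
    then show ?thesis unfolding g'_def using s \<open>dkO k s \<ge> 0\<close> by simp
  qed
  have lim: "(g \<longlongrightarrow> 0) (at_right 0)"
  proof -
    have l1: "((\<lambda>s. s powr (2 * k)) \<longlongrightarrow> 0) (at_right 0)"
    proof (rule tendsto_zero_powrI[where b="2 * k"])
      show "\<forall>\<^sub>F x in at_right 0. 0 \<le> (x::real)"
        using eventually_at_right_less[of "0::real"] by (rule eventually_mono) simp
    qed (auto simp: kp intro!: tendsto_ident_at)
    have l2: "(dkN k \<longlongrightarrow> 0) (at_right 0)"
      using isCont_dkN[of 0] by (simp add: isCont_def filterlim_at_split dkN_0)
    show ?thesis unfolding g_def using tendsto_mult[OF l1 l2] by simp
  qed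
  have "g t \<ge> 0" by (rule nonneg_from_right0[OF lim d nn t])
  moreover have "t powr (2 * k) > 0" using t by simp
  ultimately show ?thesis unfolding g_def by (simp add: zero_le_mult_iff)
qed

lemma dkN_neg_side:
  assumes kp: "k > 0" and t: "t > 0"
  shows "dkN k (-t) \<ge> 0"
proof -
  define A where "A s = s * (dkE k s ^ 2 - dkO k s ^ 2) - dkO k s * (dkE k s * (1 + 2 * k) - dkO k s)" for s
  have NA: "dkN k (-t) = A t" unfolding dkN_def A_def dkE_even dkO_odd by (simp add: algebra_simps)
  define g where "g s = s powr (2 * k) * A s" for s
  define g' where "g' s = s powr (2 * k) * (2 * dkO k s / s * (s * dkE k s - (k + s) * dkO k s))" for s
  have d: "(g has_real_derivative g' s) (at s)" if s: "0 < s" for s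
  proof -
    have D1: "((\<lambda>s. s powr (2 * k)) has_real_derivative (2 * k) * s powr (2 * k - 1)) (at s)"
      using has_real_derivative_powr[OF s] .
    have DO: "(dkO k has_real_derivative dkE k s - 2 * k * dkO k s / s) (at s)"
      using dkO_deriv[OF k] s by simp
    have "(g has_real_derivative
        (2 * k) * s powr (2 * k - 1) * A s
        + s powr (2 * k) * ((dkE k s ^ 2 - dkO k s ^ 2)
             + s * (2 * dkE k s * dkO k s - 2 * dkO k s * (dkE k s - 2 * k * dkO k s / s))
             - (dkE k s - 2 * k * dkO k s / s) * (dkE k s * (1 + 2 * k) - dkO k s)
             - dkO k s * (dkO k s * (1 + 2 * k) - (dkE k s - 2 * k * dkO k s / s)))) (at s)"
      unfolding g_def[abs_def] A_def
      by (rule derivative_eq_intros D1 dkE_deriv[OF k] DO refl | simp)+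
    moreover have "(2 * k) * s powr (2 * k - 1) * A s
        + s powr (2 * k) * ((dkE k s ^ 2 - dkO k s ^ 2)
             + s * (2 * dkE k s * dkO k s - 2 * dkO k s * (dkE k s - 2 * k * dkO k s / s))
             - (dkE k s - 2 * k * dkO k s / s) * (dkE k s * (1 + 2 * k) - dkO k s)
             - dkO k s * (dkO k s * (1 + 2 * k) - (dkE k s - 2 * k * dkO k s / s))) = g' s"
      unfolding g'_def A_def powr_minus_one_div[OF s, of "2 * k"] using s
      by (simp add: field_simps power2_eq_square)
    ultimately show ?thesis by simp
  qed
  have nn: "g' s \<ge> 0" if s: "0 < s" for s
  proof -
    have "(k + s) * dkO k s \<le> s * dkE k s" by (rule dk_kk[OF k kp s])
    moreover have "dkO k s \<ge> 0" using dkO_nonneg[OF k] s by simp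
    ultimately show ?thesis unfolding g'_def using s by simp
  qed
  have lim: "(g \<longlongrightarrow> 0) (at_right 0)"
  proof -
    have l1: "((\<lambda>s. s powr (2 * k)) \<longlongrightarrow> 0) (at_right 0)"
    proof (rule tendsto_zero_powrI[where b="2 * k"])
      show "\<forall>\<^sub>F x in at_right 0. 0 \<le> (x::real)"
        using eventually_at_right_less[of "0::real"] by (rule eventually_mono) simp
    qed (auto simp: kp intro!: tendsto_ident_at)
    have cA: "isCont A 0"
      unfolding A_def[abs_def] using isCont_dkE[OF k] isCont_dkO[OF k]
      by (auto intro!: continuous_intros)
    have l2: "(A \<longlongrightarrow> 0) (at_right 0)"
      using cA by (simp add: isCont_def filterlim_at_split A_def dkO_0)
    show ?thesis unfolding g_def using tendsto_mult[OF l1 l2] by simp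
  qed
  have "g t \<ge> 0" by (rule nonneg_from_right0[OF lim d nn t])
  moreover have "t powr (2 * k) > 0" using t by simp
  ultimately show ?thesis unfolding g_def NA by (simp add: zero_le_mult_iff)
qed

lemma dkN_nonneg: assumes kp: "k > 0" shows "dkN k z \<ge> 0"
proof (cases "z > 0")
  case True then show ?thesis using dkN_pos_side[OF kp] by simp
next
  case False
  show ?thesis
  proof (cases "z = 0")
    case True then show ?thesis by (simp add: dkN_0)
  next
    case False
    then have "-z > 0" using \<open>\<not> z > 0\<close> by simp
    from dkN_neg_side[OF kp this] show ?thesis by simp
  qed
qed

end


context
  fixes k :: real assumes k: "k \<ge> 0"
begin

lemma dkF2_formula:
  assumes z: "z \<noteq> 0"
  shows "dkF2 k z = dkF1 k z - 2 * k * ((dkE k z - 2 * k * dkO k z / z) / z - dkO k z / z ^ 2)"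
proof -
  define h where "h w = dkF k w - 2 * k * dkO k w / w" for w
  have DO: "(dkO k has_real_derivative dkE k z - 2 * k * dkO k z / z) (at z)"
    using dkO_deriv[OF k] z by simp
  have "(h has_real_derivative dkF1 k z - 2 * k * (((dkE k z - 2 * k * dkO k z / z) * z - dkO k z * 1) / (z * z))) (at z)"
    unfolding h_def[abs_def]
    by (rule derivative_eq_intros dkF_deriv[OF k] DO DERIV_ident refl | simp add: z)+ (simp add: algebra_simps)
  then have "(dkF1 k has_real_derivative dkF1 k z - 2 * k * (((dkE k z - 2 * k * dkO k z / z) * z - dkO k z * 1) / (z * z))) (at z)"
  proof (rule has_field_derivative_transform_within_open[where S="-{0}"])
    show "open (- {0::real})" by auto
    show "z \<in> - {0}" using z by simp
    fix w :: real assume "w \<in> - {0}"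
    then show "h w = dkF1 k w" unfolding h_def using dkF1_formula[OF k, of w] by simp
  qed
  from DERIV_unique[OF dkF1_deriv[OF k] this]
  have "dkF2 k z = dkF1 k z - 2 * k * (((dkE k z - 2 * k * dkO k z / z) * z - dkO k z * 1) / (z * z))" .
  also have "\<dots> = dkF1 k z - 2 * k * ((dkE k z - 2 * k * dkO k z / z) / z - dkO k z / z ^ 2)"
    using z by (simp add: diff_divide_distrib power2_eq_square)
  finally show ?thesis .
qed

lemma dkF_F2_identity:
  assumes z: "z \<noteq> 0"
  shows "dkF k z * dkF2 k z - dkF1 k z ^ 2 = 2 * k / z ^ 2 * dkN k z"
  unfolding dkF2_formula[OF z] dkF1_formula[OF k z] dkF_EO[of k z] dkN_def using z
  by (simp add: field_simps power2_eq_square)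

lemma dkG_deriv: "(dkG k has_real_derivative dkG1 k z) (at z)"
  unfolding dkG_def[abs_def] dkG1_def
  by (rule derivative_eq_intros dkF_deriv[OF k] refl | simp add: dkF_pos[OF k])+

lemma dkG1_deriv: "(dkG1 k has_real_derivative dkG2 k z) (at z)"
  unfolding dkG1_def[abs_def] dkG2_def
  using dkF_pos[OF k, of z]
  by (auto intro!: derivative_eq_intros dkF_deriv[OF k] dkF1_deriv[OF k] simp: power2_eq_square)

lemma isCont_dkG: "isCont (dkG k) z" using dkG_deriv by (rule DERIV_isCont)
lemma isCont_dkG1: "isCont (dkG1 k) z" using dkG1_deriv by (rule DERIV_isCont)
lemma isCont_dkG2: "isCont (dkG2 k) z"
proof -
  have "dkF k z \<noteq> 0" using dkF_pos[OF k, of z] by simp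
  then show ?thesis
    unfolding dkG2_def[abs_def] using isCont_dkF[OF k] isCont_dkF1[OF k] isCont_dkF2[OF k]
    by (auto intro!: continuous_intros)
qed

lemma dkG_0: "dkG k 0 = 0" by (simp add: dkG_def dkF_0)

lemma dkG2_nonneg_nz: assumes z: "z \<noteq> 0" shows "dkG2 k z \<ge> 0"
proof -
  have "dkF k z * dkF2 k z - dkF1 k z ^ 2 \<ge> 0"
  proof (cases "k = 0")
    case True then show ?thesis using dkF_F2_identity[OF z] by simp
  next
    case False
    then have "k > 0" using k by simp
    then show ?thesis using dkF_F2_identity[OF z] dkN_nonneg[OF k \<open>k > 0\<close>, of z] k by simp
  qed
  then show ?thesis unfolding dkG2_def by (simp add: mult.commute)
qed

lemma dkG2_nonneg: "dkG2 k z \<ge> 0"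
proof (cases "z = 0")
  case False then show ?thesis by (rule dkG2_nonneg_nz)
next
  case True
  have "(dkG2 k \<longlongrightarrow> dkG2 k 0) (at 0)" using isCont_dkG2[of 0] by (simp add: isCont_def)
  moreover have "\<forall>\<^sub>F w in at 0. 0 \<le> dkG2 k w"
    by (auto simp: eventually_at_filter intro!: always_eventually dkG2_nonneg_nz)
  ultimately have "0 \<le> dkG2 k 0" by (rule tendsto_lowerbound) simp
  then show ?thesis using True by simp
qed

lemma dkG1_mono: "a \<le> b \<Longrightarrow> dkG1 k a \<le> dkG1 k b"
  by (rule DERIV_nonneg_imp_nondecreasing) (auto intro!: exI dkG1_deriv dkG2_nonneg)

lemma dkG_tangent: "dkG k z - dkG k (-z) \<le> 2 * z * dkG1 k z"
proof (cases "z > 0")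
  case True
  then have "-z < z" by simp
  from MVT2[OF this, of "dkG k" "dkG1 k"] dkG_deriv obtain c where
    c: "-z < c" "c < z" "dkG k z - dkG k (-z) = (z - -z) * dkG1 k c" by blast
  have "dkG1 k c \<le> dkG1 k z" using c by (intro dkG1_mono) simp
  then show ?thesis using c True by (simp add: mult_left_mono)
next
  case False
  show ?thesis
  proof (cases "z = 0")
    case True then show ?thesis by simp
  next
    case False
    then have zz: "z < -z" using \<open>\<not> z > 0\<close> by simp
    from MVT2[OF zz, of "dkG k" "dkG1 k"] dkG_deriv obtain c where
      c: "z < c" "c < -z" "dkG k (-z) - dkG k z = (-z - z) * dkG1 k c" by blast
    have "dkG1 k z \<le> dkG1 k c" using c by (intro dkG1_mono) simp
    then have "z * (2 * dkG1 k c) \<le> z * (2 * dkG1 k z)" using zz mult_left_mono_neg[of "2 * dkG1 k z" "2 * dkG1 k c" z] by simp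
    moreover have "dkG k z = dkG k (-z) + z * (2 * dkG1 k c)" using c(3) by (simp add: algebra_simps)
    ultimately show ?thesis by linarith
  qed
qed

lemma dkT_alt: "z \<noteq> 0 \<Longrightarrow> dkT k z = dkG2 k z + k * ((2 * z * dkG1 k z - (dkG k z - dkG k (-z))) / z ^ 2)"
  unfolding dkT_def by (simp add: field_simps power2_eq_square)

lemma dkT_nonneg: assumes z: "z \<noteq> 0" shows "dkT k z \<ge> 0"
  unfolding dkT_alt[OF z] using dkG2_nonneg[of z] dkG_tangent[of z] k
  by (intro add_nonneg_nonneg mult_nonneg_nonneg divide_nonneg_nonneg) auto

lemma dkTh_nonneg: "dkTh k z \<ge> 0"
  unfolding dkTh_def using dkT_nonneg dkG2_nonneg k by auto

lemma dk_quot_lim: "((\<lambda>z. (2 * z * dkG1 k z - (dkG k z - dkG k (-z))) / z ^ 2) \<longlongrightarrow> 2 * dkG2 k 0) (at 0)"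
proof (rule lhopital)
  let ?f = "\<lambda>z. 2 * z * dkG1 k z - (dkG k z - dkG k (-z))"
  have cf: "isCont ?f 0"
    using isCont_dkG1[of 0] isCont_dkG isCont_dkG[of 0]
    by (auto intro!: continuous_intros isCont_o2[of _ uminus "dkG k", simplified] simp: o_def)
  show "(?f \<longlongrightarrow> 0) (at 0)" using cf by (simp add: isCont_def dkG_0)
  show "((\<lambda>z. z ^ 2) \<longlongrightarrow> 0) (at (0::real))" by (auto intro!: tendsto_eq_intros)
  show "\<forall>\<^sub>F x in at 0. x ^ 2 \<noteq> (0::real)" by (auto simp: eventually_at_filter)
  show "\<forall>\<^sub>F x in at 0. 2 * x \<noteq> (0::real)" by (auto simp: eventually_at_filter)
  show "\<forall>\<^sub>F x in at 0. (?f has_real_derivative (2 * dkG1 k x + 2 * x * dkG2 k x - (dkG1 k x + dkG1 k (-x)))) (at x)"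
  proof (intro always_eventually allI)
    fix x :: real
    have Dn: "((\<lambda>z. dkG k (-z)) has_real_derivative - dkG1 k (-x)) (at x)"
      using DERIV_chain2[OF dkG_deriv DERIV_minus[OF DERIV_ident]] by simp
    show "(?f has_real_derivative (2 * dkG1 k x + 2 * x * dkG2 k x - (dkG1 k x + dkG1 k (-x)))) (at x)"
      by (rule derivative_eq_intros dkG1_deriv dkG_deriv Dn refl | simp)+
  qed
  show "\<forall>\<^sub>F x in at 0. ((\<lambda>z. z ^ 2) has_real_derivative 2 * x) (at x)"
    by (auto intro!: always_eventually derivative_eq_intros)
  show "((\<lambda>x. (2 * dkG1 k x + 2 * x * dkG2 k x - (dkG1 k x + dkG1 k (-x))) / (2 * x)) \<longlongrightarrow> 2 * dkG2 k 0) (at 0)"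
  proof -
    have q1: "((\<lambda>y. (dkG1 k y - dkG1 k 0) / (y - 0)) \<longlongrightarrow> dkG2 k 0) (at 0)"
      using dkG1_deriv[of 0] by (simp only: has_field_derivative_iff)
    have Dn_gen: "((\<lambda>z. dkG1 k (-z)) has_real_derivative - dkG2 k (-x)) (at x)" for x
      using DERIV_chain2[OF dkG1_deriv DERIV_minus[OF DERIV_ident]] by simp
    note Dn = Dn_gen[of 0]
    have q2: "((\<lambda>y. (dkG1 k (-y) - dkG1 k (-0)) / (y - 0)) \<longlongrightarrow> - dkG2 k (-0)) (at 0)"
      using Dn by (simp only: has_field_derivative_iff)
    have c2: "(dkG2 k \<longlongrightarrow> dkG2 k 0) (at 0)" using isCont_dkG2[of 0] by (simp add: isCont_def)
    have "((\<lambda>y. ((dkG1 k y - dkG1 k 0) / (y - 0) - (dkG1 k (-y) - dkG1 k (-0)) / (y - 0)) / 2 + dkG2 k y)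
        \<longlongrightarrow> (dkG2 k 0 - - dkG2 k (-0)) / 2 + dkG2 k 0) (at 0)"
      by (intro tendsto_intros q1 q2 c2) simp
    then have L: "((\<lambda>y. ((dkG1 k y - dkG1 k 0) / (y - 0) - (dkG1 k (-y) - dkG1 k (-0)) / (y - 0)) / 2 + dkG2 k y)
        \<longlongrightarrow> 2 * dkG2 k 0) (at 0)" by simp
    have ev: "\<forall>\<^sub>F y in at 0. ((dkG1 k y - dkG1 k 0) / (y - 0) - (dkG1 k (-y) - dkG1 k (-0)) / (y - 0)) / 2 + dkG2 k y
        = (2 * dkG1 k y + 2 * y * dkG2 k y - (dkG1 k y + dkG1 k (-y))) / (2 * y)"
      by (auto simp: eventually_at_filter field_simps intro!: always_eventually)
    show ?thesis using tendsto_cong[OF ev] L by simp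
  qed
qed

lemma isCont_dkT: "z \<noteq> 0 \<Longrightarrow> isCont (dkT k) z"
  unfolding dkT_def[abs_def] using isCont_dkG1[of z] isCont_dkG2[of z] isCont_dkG[of z] isCont_dkG[of "-z"]
  by (auto intro!: continuous_intros isCont_o2[of _ uminus "dkG k", simplified] simp: o_def)

lemma isCont_dkTh: "isCont (dkTh k) z"
proof (cases "z = 0")
  case True
  have ev: "\<forall>\<^sub>F w in at 0. dkG2 k w + k * ((2 * w * dkG1 k w - (dkG k w - dkG k (-w))) / w ^ 2) = dkTh k w"
    by (auto simp: eventually_at_filter dkTh_def dkT_alt intro!: always_eventually)
  have "((\<lambda>w. dkG2 k w + k * ((2 * w * dkG1 k w - (dkG k w - dkG k (-w))) / w ^ 2)) \<longlongrightarrow> dkG2 k 0 + k * (2 * dkG2 k 0)) (at 0)"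
    using isCont_dkG2[of 0] dk_quot_lim by (intro tendsto_intros) (auto simp: isCont_def)
  then have "(dkTh k \<longlongrightarrow> dkG2 k 0 + k * (2 * dkG2 k 0)) (at 0)"
    using tendsto_cong[OF ev] by simp
  then have "(dkTh k \<longlongrightarrow> dkTh k 0) (at 0)"
    by (simp add: dkTh_def algebra_simps)
  then show ?thesis using True by (simp add: isCont_def)
next
  case False
  have ev: "\<forall>\<^sub>F w in nhds z. dkT k w = dkTh k w"
  proof -
    have "\<forall>\<^sub>F w in nhds z. w \<noteq> 0" using False by (rule t1_space_nhds)
    then show ?thesis by (rule eventually_mono) (simp add: dkTh_def)
  qed
  have "isCont (dkT k) z" by (rule isCont_dkT[OF False])
  then show ?thesis using isCont_cong[OF ev] by simp
qed

end


lemma refl_eq2: "\<beta> \<bullet> \<beta> = 2 \<Longrightarrow> refl \<beta> x = x - (\<beta> \<bullet> x) *\<^sub>R \<beta>"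
  unfolding refl_def by (simp add: power2_norm_eq_inner)

lemma sum_sq_basis: "(\<Sum>i\<in>Basis. (\<beta> \<bullet> i) * (\<beta> \<bullet> i)) = \<beta> \<bullet> (\<beta>::'a::euclidean_space)"
  using euclidean_inner[of \<beta> \<beta>] by simp

lemma sum_inner_basis: "(\<Sum>i\<in>(Basis::'a::euclidean_space set). (i \<bullet> i)) = real DIM('a)"
  by simp

lemma frechet_grad_inner:
  assumes "bounded_linear L"
  shows "\<alpha> \<bullet> (\<Sum>i\<in>Basis. L i *\<^sub>R i) = L (\<alpha>::'a::euclidean_space)"
proof -
  have "L \<alpha> = L (\<Sum>i\<in>Basis. (\<alpha> \<bullet> i) *\<^sub>R i)" by (simp add: euclidean_representation)
  also have "\<dots> = (\<Sum>i\<in>Basis. (\<alpha> \<bullet> i) * L i)"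
    using assms by (simp add: bounded_linear_def linear_simps(5) linear_sum)
  finally show ?thesis by (simp add: inner_sum_right mult.commute)
qed

locale osys =
  fixes Rp :: "'a::euclidean_space set" and \<kappa> :: "'a \<Rightarrow> real"
  assumes fin: "finite Rp"
    and nrm: "\<And>\<beta>. \<beta> \<in> Rp \<Longrightarrow> \<beta> \<bullet> \<beta> = 2"
    and orth: "\<And>\<beta> \<gamma>. \<beta> \<in> Rp \<Longrightarrow> \<gamma> \<in> Rp \<Longrightarrow> \<beta> \<noteq> \<gamma> \<Longrightarrow> \<beta> \<bullet> \<gamma> = 0"
    and kpos: "\<And>\<beta>. \<beta> \<in> Rp \<Longrightarrow> \<kappa> \<beta> \<ge> 0"
begin

lemma refl_eq: "\<beta> \<in> Rp \<Longrightarrow> refl \<beta> x = x - (\<beta> \<bullet> x) *\<^sub>R \<beta>"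
  using refl_eq2 nrm by blast

lemma inner_refl_other: "\<beta> \<in> Rp \<Longrightarrow> \<gamma> \<in> Rp \<Longrightarrow> \<gamma> \<noteq> \<beta> \<Longrightarrow> \<gamma> \<bullet> refl \<beta> x = \<gamma> \<bullet> x"
  using orth[of \<gamma> \<beta>] by (simp add: refl_eq inner_diff_right)

lemma inner_refl_self: "\<beta> \<in> Rp \<Longrightarrow> \<beta> \<bullet> refl \<beta> x = - (\<beta> \<bullet> x)"
  using nrm[of \<beta>] by (simp add: refl_eq inner_diff_right)

lemma inner_refl_any: "\<beta> \<in> Rp \<Longrightarrow> refl \<beta> x \<bullet> y = x \<bullet> y - (\<beta> \<bullet> x) * (\<beta> \<bullet> y)"
  by (simp add: refl_eq inner_diff_left)

lemma refl_normsq: "\<beta> \<in> Rp \<Longrightarrow> refl \<beta> x \<bullet> refl \<beta> x = x \<bullet> x"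
  using nrm[of \<beta>] by (simp add: refl_eq inner_diff_left inner_diff_right inner_commute algebra_simps)

lemma sum_single:
  fixes g :: "'a \<Rightarrow> real"
  assumes "\<alpha> \<in> Rp" "\<And>\<beta>. \<beta> \<in> Rp \<Longrightarrow> \<beta> \<noteq> \<alpha> \<Longrightarrow> g \<beta> = 0"
  shows "(\<Sum>\<beta>\<in>Rp. g \<beta>) = g \<alpha>"
  using assms fin by (subst sum.remove[of _ \<alpha>]) (auto intro!: sum.neutral)

lemma sum_change_one:
  fixes g h :: "'a \<Rightarrow> real"
  assumes "\<alpha> \<in> Rp" "\<And>\<beta>. \<beta> \<in> Rp \<Longrightarrow> \<beta> \<noteq> \<alpha> \<Longrightarrow> g \<beta> = h \<beta>"
  shows "(\<Sum>\<beta>\<in>Rp. g \<beta>) - (\<Sum>\<beta>\<in>Rp. h \<beta>) = g \<alpha> - h \<alpha>"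
proof -
  have "(\<Sum>\<beta>\<in>Rp. g \<beta>) - (\<Sum>\<beta>\<in>Rp. h \<beta>) = (\<Sum>\<beta>\<in>Rp. g \<beta> - h \<beta>)" by (rule sum_subtractf[symmetric])
  also have "\<dots> = g \<alpha> - h \<alpha>" by (rule sum_single) (use assms in auto)
  finally show ?thesis .
qed

definition fgen :: "real \<Rightarrow> real \<Rightarrow> 'a \<Rightarrow> ('a \<Rightarrow> real \<Rightarrow> real) \<Rightarrow> 'a \<Rightarrow> real" where
  "fgen C a w H z = C - a * (z \<bullet> z) + z \<bullet> w + (\<Sum>\<beta>\<in>Rp. H \<beta> (\<beta> \<bullet> z))"

lemma sumH_has_derivative:
  assumes "\<And>\<beta> s. \<beta> \<in> Rp \<Longrightarrow> (H \<beta> has_real_derivative H1 \<beta> s) (at s)"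
  shows "((\<lambda>z. \<Sum>\<beta>\<in>Rp. H \<beta> (\<beta> \<bullet> z)) has_derivative (\<lambda>h. \<Sum>\<beta>\<in>Rp. (\<beta> \<bullet> h) * H1 \<beta> (\<beta> \<bullet> z))) (at z)"
proof (rule has_derivative_sum)
  fix \<beta> assume b: "\<beta> \<in> Rp"
  show "((\<lambda>z. H \<beta> (\<beta> \<bullet> z)) has_derivative (\<lambda>h. (\<beta> \<bullet> h) * H1 \<beta> (\<beta> \<bullet> z))) (at z)"
    by (rule DERIV_compose_FDERIV[OF assms[OF b]]) (auto intro!: derivative_eq_intros)
qed

lemma sumH_has_derivative_w:
  assumes "\<And>\<beta> s. \<beta> \<in> Rp \<Longrightarrow> (H \<beta> has_real_derivative H1 \<beta> s) (at s)"
  shows "((\<lambda>z. \<Sum>\<beta>\<in>Rp. c \<beta> * H \<beta> (\<beta> \<bullet> z)) has_derivative (\<lambda>h. \<Sum>\<beta>\<in>Rp. c \<beta> * ((\<beta> \<bullet> h) * H1 \<beta> (\<beta> \<bullet> z)))) (at z)"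
proof (rule has_derivative_sum)
  fix \<beta> assume b: "\<beta> \<in> Rp"
  have "((\<lambda>z. H \<beta> (\<beta> \<bullet> z)) has_derivative (\<lambda>h. (\<beta> \<bullet> h) * H1 \<beta> (\<beta> \<bullet> z))) (at z)"
    by (rule DERIV_compose_FDERIV[OF assms[OF b]]) (auto intro!: derivative_eq_intros)
  then show "((\<lambda>z. c \<beta> * H \<beta> (\<beta> \<bullet> z)) has_derivative (\<lambda>h. c \<beta> * ((\<beta> \<bullet> h) * H1 \<beta> (\<beta> \<bullet> z)))) (at z)"
    by (rule has_derivative_mult_right)
qed

lemma fgen_has_derivative:
  assumes "\<And>\<beta> s. \<beta> \<in> Rp \<Longrightarrow> (H \<beta> has_real_derivative H1 \<beta> s) (at s)"
  shows "(fgen C a w H has_derivative (\<lambda>h. - a * (2 * (z \<bullet> h)) + h \<bullet> w + (\<Sum>\<beta>\<in>Rp. (\<beta> \<bullet> h) * H1 \<beta> (\<beta> \<bullet> z)))) (at z)"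
  unfolding fgen_def[abs_def]
  by (rule derivative_eq_intros sumH_has_derivative[OF assms] refl | simp)+ (simp add: inner_commute)

lemma fgen_frechet:
  assumes "\<And>\<beta> s. \<beta> \<in> Rp \<Longrightarrow> (H \<beta> has_real_derivative H1 \<beta> s) (at s)"
  shows "frechet_derivative (fgen C a w H) (at z) = (\<lambda>h. - a * (2 * (z \<bullet> h)) + h \<bullet> w + (\<Sum>\<beta>\<in>Rp. (\<beta> \<bullet> h) * H1 \<beta> (\<beta> \<bullet> z)))"
  using fgen_has_derivative[OF assms] by (rule frechet_derivative_at[symmetric])

lemma fgen_laplacian:
  assumes d1: "\<And>\<beta> s. \<beta> \<in> Rp \<Longrightarrow> (H \<beta> has_real_derivative H1 \<beta> s) (at s)"
    and d2: "\<And>\<beta> s. \<beta> \<in> Rp \<Longrightarrow> (H1 \<beta> has_real_derivative H2 \<beta> s) (at s)"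
  shows "laplacian (fgen C a w H) x = - 2 * a * real DIM('a) + (\<Sum>\<beta>\<in>Rp. 2 * H2 \<beta> (\<beta> \<bullet> x))"
proof -
  have inner_d: "((\<lambda>z. - a * (2 * (z \<bullet> i)) + i \<bullet> w + (\<Sum>\<beta>\<in>Rp. (\<beta> \<bullet> i) * H1 \<beta> (\<beta> \<bullet> z))) has_derivative
      (\<lambda>h. - a * (2 * (h \<bullet> i)) + (\<Sum>\<beta>\<in>Rp. (\<beta> \<bullet> i) * ((\<beta> \<bullet> h) * H2 \<beta> (\<beta> \<bullet> x))))) (at x)" for i
    by (rule derivative_eq_intros sumH_has_derivative_w[OF d2] refl | simp)+
  have "laplacian (fgen C a w H) x = (\<Sum>i\<in>Basis. - a * (2 * (i \<bullet> i)) + (\<Sum>\<beta>\<in>Rp. (\<beta> \<bullet> i) * ((\<beta> \<bullet> i) * H2 \<beta> (\<beta> \<bullet> x))))"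
    unfolding laplacian_def
  proof (rule sum.cong[OF refl])
    fix i assume "i \<in> (Basis::'a set)"
    have e: "(\<lambda>z. frechet_derivative (fgen C a w H) (at z) i) = (\<lambda>z. - a * (2 * (z \<bullet> i)) + i \<bullet> w + (\<Sum>\<beta>\<in>Rp. (\<beta> \<bullet> i) * H1 \<beta> (\<beta> \<bullet> z)))"
      by (rule ext) (simp add: fgen_frechet[OF d1])
    show "frechet_derivative (\<lambda>z. frechet_derivative (fgen C a w H) (at z) i) (at x) i = - a * (2 * (i \<bullet> i)) + (\<Sum>\<beta>\<in>Rp. (\<beta> \<bullet> i) * ((\<beta> \<bullet> i) * H2 \<beta> (\<beta> \<bullet> x)))"
      unfolding e frechet_derivative_at[OF inner_d[of i], symmetric] by simp
  qed
  also have "\<dots> = - a * 2 * (\<Sum>i\<in>(Basis::'a set). i \<bullet> i) + (\<Sum>\<beta>\<in>Rp. H2 \<beta> (\<beta> \<bullet> x) * (\<Sum>i\<in>(Basis::'a set). (\<beta> \<bullet> i) * (\<beta> \<bullet> i)))"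
    by (simp add: sum.distrib sum_subtractf sum_distrib_left sum_distrib_right sum.swap[of _ Basis Rp] algebra_simps)
  also have "\<dots> = - 2 * a * real DIM('a) + (\<Sum>\<beta>\<in>Rp. 2 * H2 \<beta> (\<beta> \<bullet> x))"
    by (simp add: sum_sq_basis nrm mult.commute cong: sum.cong)
  finally show ?thesis .
qed

end


context osys begin

lemma fgen_dunkl_raw:
  assumes d1: "\<And>\<beta> s. \<beta> \<in> Rp \<Longrightarrow> (H \<beta> has_real_derivative H1 \<beta> s) (at s)"
    and d2: "\<And>\<beta> s. \<beta> \<in> Rp \<Longrightarrow> (H1 \<beta> has_real_derivative H2 \<beta> s) (at s)"
    and x: "x \<in> regular_set Rp"
  shows "dunkl_laplacian_raw Rp \<kappa> (fgen C a w H) x =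
    - 2 * a * (real DIM('a) + 2 * lambda_k Rp \<kappa>) +
    (\<Sum>\<alpha>\<in>Rp. 2 * H2 \<alpha> (\<alpha> \<bullet> x) + 2 * \<kappa> \<alpha> * (2 * H1 \<alpha> (\<alpha> \<bullet> x) / (\<alpha> \<bullet> x)
        - (H \<alpha> (\<alpha> \<bullet> x) - H \<alpha> (- (\<alpha> \<bullet> x))) / (\<alpha> \<bullet> x) ^ 2))"
proof -
  let ?f = "fgen C a w H"
  have bl: "bounded_linear (frechet_derivative ?f (at x))"
  proof -
    have D: "(?f has_derivative (\<lambda>h. - a * (2 * (x \<bullet> h)) + h \<bullet> w + (\<Sum>\<beta>\<in>Rp. (\<beta> \<bullet> h) * H1 \<beta> (\<beta> \<bullet> x)))) (at x)"
      by (rule fgen_has_derivative) (rule d1)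
    have "bounded_linear (\<lambda>h. - a * (2 * (x \<bullet> h)) + h \<bullet> w + (\<Sum>\<beta>\<in>Rp. (\<beta> \<bullet> h) * H1 \<beta> (\<beta> \<bullet> x)))"
      by (rule has_derivative_bounded_linear[OF D])
    then show ?thesis by (simp only: frechet_derivative_at[OF D])
  qed
  have grad: "\<alpha> \<bullet> grad ?f x = - 2 * a * (\<alpha> \<bullet> x) + \<alpha> \<bullet> w + 2 * H1 \<alpha> (\<alpha> \<bullet> x)" if a: "\<alpha> \<in> Rp" for \<alpha>
  proof -
    have "\<alpha> \<bullet> grad ?f x = frechet_derivative ?f (at x) \<alpha>"
      unfolding grad_def by (rule frechet_grad_inner[OF bl])
    also have "\<dots> = - a * (2 * (x \<bullet> \<alpha>)) + \<alpha> \<bullet> w + (\<Sum>\<beta>\<in>Rp. (\<beta> \<bullet> \<alpha>) * H1 \<beta> (\<beta> \<bullet> x))"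
      by (simp add: frechet_derivative_at[OF fgen_has_derivative[where H=H and ?H1.0=H1], symmetric] d1)
    also have "(\<Sum>\<beta>\<in>Rp. (\<beta> \<bullet> \<alpha>) * H1 \<beta> (\<beta> \<bullet> x)) = (\<alpha> \<bullet> \<alpha>) * H1 \<alpha> (\<alpha> \<bullet> x)"
      by (rule sum_single[OF a]) (use orth a in auto)
    finally show ?thesis using nrm[OF a] by (simp add: inner_commute)
  qed
  have diff: "?f x - ?f (refl \<alpha> x) = (\<alpha> \<bullet> x) * (\<alpha> \<bullet> w) + H \<alpha> (\<alpha> \<bullet> x) - H \<alpha> (- (\<alpha> \<bullet> x))" if a: "\<alpha> \<in> Rp" for \<alpha>
  proof -
    have s: "(\<Sum>\<beta>\<in>Rp. H \<beta> (\<beta> \<bullet> x)) - (\<Sum>\<beta>\<in>Rp. H \<beta> (\<beta> \<bullet> refl \<alpha> x)) = H \<alpha> (\<alpha> \<bullet> x) - H \<alpha> (\<alpha> \<bullet> refl \<alpha> x)"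
      by (rule sum_change_one[OF a]) (simp add: inner_refl_other a)
    show ?thesis unfolding fgen_def using s refl_normsq[OF a, of x] inner_refl_any[OF a, of x w] inner_refl_self[OF a, of x]
      by (simp add: algebra_simps)
  qed
  have tm: "\<kappa> \<alpha> * ((\<alpha> \<bullet> grad ?f x) / (\<alpha> \<bullet> x) - (?f x - ?f (refl \<alpha> x)) / (\<alpha> \<bullet> x)\<^sup>2)
      = - 2 * a * \<kappa> \<alpha> + \<kappa> \<alpha> * (2 * H1 \<alpha> (\<alpha> \<bullet> x) / (\<alpha> \<bullet> x) - (H \<alpha> (\<alpha> \<bullet> x) - H \<alpha> (- (\<alpha> \<bullet> x))) / (\<alpha> \<bullet> x) ^ 2)"
    if a: "\<alpha> \<in> Rp" for \<alpha>
  proof -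
    have nz: "\<alpha> \<bullet> x \<noteq> 0" using x a unfolding regular_set_def by auto
    define s where "s = \<alpha> \<bullet> x"
    have s0: "s \<noteq> 0" using nz s_def by simp
    have eq: "(- 2 * a * s + \<alpha> \<bullet> w + 2 * H1 \<alpha> s) / s - (s * (\<alpha> \<bullet> w) + H \<alpha> s - H \<alpha> (- s)) / s\<^sup>2
       = - 2 * a + (2 * H1 \<alpha> s / s - (H \<alpha> s - H \<alpha> (- s)) / s ^ 2)"
      using s0 by (simp add: power2_eq_square diff_divide_distrib add_divide_distrib)
    show ?thesis unfolding grad[OF a] diff[OF a] s_def[symmetric] eq
      by (simp add: algebra_simps)
  qed
  have L: "laplacian ?f x = - 2 * a * real DIM('a) + (\<Sum>\<beta>\<in>Rp. 2 * H2 \<beta> (\<beta> \<bullet> x))"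
    by (rule fgen_laplacian) (auto intro: d1 d2)
  have "dunkl_laplacian_raw Rp \<kappa> ?f x = laplacian ?f x + 2 * (\<Sum>\<alpha>\<in>Rp. - 2 * a * \<kappa> \<alpha> + \<kappa> \<alpha> * (2 * H1 \<alpha> (\<alpha> \<bullet> x) / (\<alpha> \<bullet> x) - (H \<alpha> (\<alpha> \<bullet> x) - H \<alpha> (- (\<alpha> \<bullet> x))) / (\<alpha> \<bullet> x) ^ 2))"
    unfolding dunkl_laplacian_raw_def using tm by (simp cong: sum.cong)
  also have "\<dots> = - 2 * a * (real DIM('a) + 2 * lambda_k Rp \<kappa>) +
    (\<Sum>\<alpha>\<in>Rp. 2 * H2 \<alpha> (\<alpha> \<bullet> x) + 2 * \<kappa> \<alpha> * (2 * H1 \<alpha> (\<alpha> \<bullet> x) / (\<alpha> \<bullet> x)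
        - (H \<alpha> (\<alpha> \<bullet> x) - H \<alpha> (- (\<alpha> \<bullet> x))) / (\<alpha> \<bullet> x) ^ 2))"
  proof -
    define Z where "Z \<alpha> = 2 * H1 \<alpha> (\<alpha> \<bullet> x) / (\<alpha> \<bullet> x) - (H \<alpha> (\<alpha> \<bullet> x) - H \<alpha> (- (\<alpha> \<bullet> x))) / (\<alpha> \<bullet> x) ^ 2" for \<alpha>
    have e1: "2 * (\<Sum>\<alpha>\<in>Rp. - 2 * a * \<kappa> \<alpha> + \<kappa> \<alpha> * Z \<alpha>) = - 4 * a * (\<Sum>\<alpha>\<in>Rp. \<kappa> \<alpha>) + (\<Sum>\<alpha>\<in>Rp. 2 * \<kappa> \<alpha> * Z \<alpha>)"
      by (simp add: sum.distrib sum_distrib_left mult.assoc sum_subtractf sum_negf)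
    have e2: "(\<Sum>\<alpha>\<in>Rp. 2 * H2 \<alpha> (\<alpha> \<bullet> x) + 2 * \<kappa> \<alpha> * Z \<alpha>) = (\<Sum>\<alpha>\<in>Rp. 2 * H2 \<alpha> (\<alpha> \<bullet> x)) + (\<Sum>\<alpha>\<in>Rp. 2 * \<kappa> \<alpha> * Z \<alpha>)"
      by (simp add: sum.distrib)
    show ?thesis unfolding Z_def[symmetric] lambda_k_def L e1 e2 by (simp add: algebra_simps)
  qed
  finally show ?thesis .
qed

end


definition dkHy :: "('a::euclidean_space \<Rightarrow> real) \<Rightarrow> 'a \<Rightarrow> 'a \<Rightarrow> real \<Rightarrow> real" where
  "dkHy \<kappa> y \<beta> s = dkG (\<kappa> \<beta>) ((\<beta> \<bullet> y) / 2 * s) - (\<beta> \<bullet> y) / 2 * s"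
definition dkHy1 :: "('a::euclidean_space \<Rightarrow> real) \<Rightarrow> 'a \<Rightarrow> 'a \<Rightarrow> real \<Rightarrow> real" where
  "dkHy1 \<kappa> y \<beta> s = (\<beta> \<bullet> y) / 2 * dkG1 (\<kappa> \<beta>) ((\<beta> \<bullet> y) / 2 * s) - (\<beta> \<bullet> y) / 2"
definition dkHy2 :: "('a::euclidean_space \<Rightarrow> real) \<Rightarrow> 'a \<Rightarrow> 'a \<Rightarrow> real \<Rightarrow> real" where
  "dkHy2 \<kappa> y \<beta> s = ((\<beta> \<bullet> y) / 2) ^ 2 * dkG2 (\<kappa> \<beta>) ((\<beta> \<bullet> y) / 2 * s)"

definition dkPhi :: "'a::euclidean_space set \<Rightarrow> ('a \<Rightarrow> real) \<Rightarrow> 'a \<Rightarrow> 'a \<Rightarrow> real" where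
  "dkPhi Rp \<kappa> y x = x \<bullet> y + (\<Sum>\<beta>\<in>Rp. dkHy \<kappa> y \<beta> (\<beta> \<bullet> x))"

definition dkEk :: "'a::euclidean_space set \<Rightarrow> ('a \<Rightarrow> real) \<Rightarrow> 'a \<Rightarrow> 'a \<Rightarrow> real" where
  "dkEk Rp \<kappa> x y = exp (dkPhi Rp \<kappa> y x)"

lemma dk_key:
  assumes k: "k \<ge> 0" and s: "s \<noteq> 0"
  shows "c * dkG1 k (c * s) - c + k * (1 - dkF k (- (c * s)) / dkF k (c * s)) / s = 0"
proof (cases "c = 0")
  case True then show ?thesis by (simp add: dkF_0)
next
  case False
  define u where "u = c * s"
  have u: "u \<noteq> 0" using False s by (simp add: u_def)
  have Fp: "dkF k u > 0" by (rule dkF_pos[OF k])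
  have ode: "u * dkF1 k u + k * (dkF k u - dkF k (-u)) = u * dkF k u" by (rule dk_ode[OF k])
  have "c * dkG1 k u - c + k * (1 - dkF k (- u) / dkF k u) / s
      = (u * dkF1 k u + k * (dkF k u - dkF k (-u)) - u * dkF k u) / (s * dkF k u)"
    using Fp s unfolding dkG1_def u_def by (simp add: field_simps)
  also have "\<dots> = 0" using ode by simp
  finally show ?thesis by (simp add: u_def)
qed

lemma dkG_scaled_deriv: "k \<ge> 0 \<Longrightarrow> ((\<lambda>s. dkG k (c * s)) has_real_derivative dkG1 k (c * s) * c) (at s)"
  by (rule DERIV_chain2[OF dkG_deriv DERIV_cmult_Id])

lemma dkG1_scaled_deriv: "k \<ge> 0 \<Longrightarrow> ((\<lambda>s. dkG1 k (c * s)) has_real_derivative dkG2 k (c * s) * c) (at s)"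
  by (rule DERIV_chain2[OF dkG1_deriv DERIV_cmult_Id])

context osys begin

lemma Hy_d1: assumes b: "\<beta> \<in> Rp" shows "(dkHy \<kappa> y \<beta> has_real_derivative dkHy1 \<kappa> y \<beta> s) (at s)"
proof -
  have "((\<lambda>s. dkG (\<kappa> \<beta>) ((\<beta> \<bullet> y) / 2 * s) - (\<beta> \<bullet> y) / 2 * s) has_real_derivative
      dkG1 (\<kappa> \<beta>) ((\<beta> \<bullet> y) / 2 * s) * ((\<beta> \<bullet> y) / 2) - (\<beta> \<bullet> y) / 2) (at s)"
    by (rule DERIV_diff[OF dkG_scaled_deriv[OF kpos[OF b]] DERIV_cmult_Id])
  then show ?thesis unfolding dkHy_def[abs_def] dkHy1_def by (simp add: mult.commute)
qed

lemma Hy_d2: assumes b: "\<beta> \<in> Rp" shows "(dkHy1 \<kappa> y \<beta> has_real_derivative dkHy2 \<kappa> y \<beta> s) (at s)"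
proof -
  have "((\<lambda>s. (\<beta> \<bullet> y) / 2 * dkG1 (\<kappa> \<beta>) ((\<beta> \<bullet> y) / 2 * s) - (\<beta> \<bullet> y) / 2) has_real_derivative
      (\<beta> \<bullet> y) / 2 * (dkG2 (\<kappa> \<beta>) ((\<beta> \<bullet> y) / 2 * s) * ((\<beta> \<bullet> y) / 2)) - 0) (at s)"
    by (rule DERIV_diff[OF DERIV_cmult[OF dkG1_scaled_deriv[OF kpos[OF b]]] DERIV_const])
  then show ?thesis unfolding dkHy1_def[abs_def] dkHy2_def by (simp add: power2_eq_square mult_ac)
qed

lemma Phi_fgen: "dkPhi Rp \<kappa> y = fgen 0 0 y (dkHy \<kappa> y)"
  by (rule ext) (simp add: dkPhi_def fgen_def inner_commute)

lemma fgen_refl_diff: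
  assumes a: "\<alpha> \<in> Rp"
  shows "fgen C a w H x - fgen C a w H (refl \<alpha> x) = (\<alpha> \<bullet> x) * (\<alpha> \<bullet> w) + H \<alpha> (\<alpha> \<bullet> x) - H \<alpha> (- (\<alpha> \<bullet> x))"
proof -
  have s: "(\<Sum>\<beta>\<in>Rp. H \<beta> (\<beta> \<bullet> x)) - (\<Sum>\<beta>\<in>Rp. H \<beta> (\<beta> \<bullet> refl \<alpha> x)) = H \<alpha> (\<alpha> \<bullet> x) - H \<alpha> (\<alpha> \<bullet> refl \<alpha> x)"
    by (rule sum_change_one[OF a]) (simp add: inner_refl_other a)
  show ?thesis unfolding fgen_def using s refl_normsq[OF a, of x] inner_refl_any[OF a, of x w] inner_refl_self[OF a, of x]
    by (simp add: algebra_simps)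
qed

lemma Phi_has_derivative:
  "(dkPhi Rp \<kappa> y has_derivative (\<lambda>h. h \<bullet> y + (\<Sum>\<beta>\<in>Rp. (\<beta> \<bullet> h) * dkHy1 \<kappa> y \<beta> (\<beta> \<bullet> x)))) (at x)"
proof -
  have "(fgen 0 0 y (dkHy \<kappa> y) has_derivative (\<lambda>h. - 0 * (2 * (x \<bullet> h)) + h \<bullet> y + (\<Sum>\<beta>\<in>Rp. (\<beta> \<bullet> h) * dkHy1 \<kappa> y \<beta> (\<beta> \<bullet> x)))) (at x)"
    by (rule fgen_has_derivative) (rule Hy_d1)
  then show ?thesis unfolding Phi_fgen by simp
qed

lemma Ek_has_derivative:
  "((\<lambda>x. dkEk Rp \<kappa> x y) has_derivative (\<lambda>h. dkEk Rp \<kappa> x y * (h \<bullet> y + (\<Sum>\<beta>\<in>Rp. (\<beta> \<bullet> h) * dkHy1 \<kappa> y \<beta> (\<beta> \<bullet> x))))) (at x)"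
  unfolding dkEk_def
  by (rule DERIV_compose_FDERIV[OF DERIV_exp Phi_has_derivative, THEN has_derivative_eq_rhs]) (simp add: fun_eq_iff mult.commute)

lemma Ek_frechet:
  "frechet_derivative (\<lambda>x. dkEk Rp \<kappa> x y) (at x) = (\<lambda>h. dkEk Rp \<kappa> x y * (h \<bullet> y + (\<Sum>\<beta>\<in>Rp. (\<beta> \<bullet> h) * dkHy1 \<kappa> y \<beta> (\<beta> \<bullet> x))))"
  using Ek_has_derivative by (rule frechet_derivative_at[symmetric])

lemma isCont_Hy1: "\<beta> \<in> Rp \<Longrightarrow> isCont (dkHy1 \<kappa> y \<beta>) s"
  using Hy_d2 by (rule DERIV_isCont)

lemma Ek_C1: "C1_fun (\<lambda>x. dkEk Rp \<kappa> x y)"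
  unfolding C1_fun_def
proof safe
  fix x show "(\<lambda>x. dkEk Rp \<kappa> x y) differentiable at x"
    using Ek_has_derivative by (auto simp: differentiable_def)
next
  fix v
  have cE: "continuous_on UNIV (\<lambda>x. dkEk Rp \<kappa> x y)"
    by (rule continuous_at_imp_continuous_on)
      (auto intro!: has_derivative_continuous[OF Ek_has_derivative])
  have cH: "continuous_on UNIV (\<lambda>x. dkHy1 \<kappa> y \<beta> (\<beta> \<bullet> x))" if "\<beta> \<in> Rp" for \<beta>
    by (rule continuous_at_imp_continuous_on)
      (auto intro!: continuous_at_compose[OF _ isCont_Hy1[OF that], unfolded o_def] continuous_intros)
  show "continuous_on UNIV (\<lambda>x. frechet_derivative (\<lambda>x. dkEk Rp \<kappa> x y) (at x) v)"
    unfolding Ek_frechet using cE cH by (auto intro!: continuous_intros)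
qed

lemma Ek_0: "dkEk Rp \<kappa> 0 y = 1"
  by (simp add: dkEk_def dkPhi_def dkHy_def dkG_def dkF_0)

lemma Ek_refl:
  assumes a: "\<alpha> \<in> Rp"
  shows "dkEk Rp \<kappa> (refl \<alpha> x) y = dkEk Rp \<kappa> x y * (dkF (\<kappa> \<alpha>) (- ((\<alpha> \<bullet> y) / 2 * (\<alpha> \<bullet> x))) / dkF (\<kappa> \<alpha>) ((\<alpha> \<bullet> y) / 2 * (\<alpha> \<bullet> x)))"
proof -
  let ?c = "(\<alpha> \<bullet> y) / 2" and ?s = "\<alpha> \<bullet> x"
  have k: "\<kappa> \<alpha> \<ge> 0" using kpos a by simp
  have "dkPhi Rp \<kappa> y x - dkPhi Rp \<kappa> y (refl \<alpha> x) = ?s * (\<alpha> \<bullet> y) + dkHy \<kappa> y \<alpha> ?s - dkHy \<kappa> y \<alpha> (- ?s)"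
    unfolding Phi_fgen by (rule fgen_refl_diff[OF a])
  also have "\<dots> = dkG (\<kappa> \<alpha>) (?c * ?s) - dkG (\<kappa> \<alpha>) (- (?c * ?s))"
    unfolding dkHy_def by (simp add: algebra_simps)
  finally have e: "dkPhi Rp \<kappa> y (refl \<alpha> x) = dkPhi Rp \<kappa> y x + (dkG (\<kappa> \<alpha>) (- (?c * ?s)) - dkG (\<kappa> \<alpha>) (?c * ?s))"
    by simp
  show ?thesis unfolding dkEk_def e exp_add exp_diff dkG_def
    using dkF_pos[OF k] by simp
qed

lemma Ek_equation:
  assumes x: "x \<in> regular_set Rp"
  shows "dunkl_op Rp \<kappa> \<xi> (\<lambda>z. dkEk Rp \<kappa> z y) x = (\<xi> \<bullet> y) * dkEk Rp \<kappa> x y"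
proof -
  let ?E = "dkEk Rp \<kappa> x y"
  have t: "\<kappa> \<alpha> * (\<alpha> \<bullet> \<xi>) * (?E - dkEk Rp \<kappa> (refl \<alpha> x) y) / (\<alpha> \<bullet> x)
      = ?E * ((\<alpha> \<bullet> \<xi>) * (\<kappa> \<alpha> * (1 - dkF (\<kappa> \<alpha>) (- ((\<alpha> \<bullet> y) / 2 * (\<alpha> \<bullet> x))) / dkF (\<kappa> \<alpha>) ((\<alpha> \<bullet> y) / 2 * (\<alpha> \<bullet> x))) / (\<alpha> \<bullet> x)))"
    if a: "\<alpha> \<in> Rp" for \<alpha>
    unfolding Ek_refl[OF a] by (simp add: algebra_simps)
  have z: "(\<alpha> \<bullet> \<xi>) * dkHy1 \<kappa> y \<alpha> (\<alpha> \<bullet> x) + (\<alpha> \<bullet> \<xi>) * (\<kappa> \<alpha> * (1 - dkF (\<kappa> \<alpha>) (- ((\<alpha> \<bullet> y) / 2 * (\<alpha> \<bullet> x))) / dkF (\<kappa> \<alpha>) ((\<alpha> \<bullet> y) / 2 * (\<alpha> \<bullet> x))) / (\<alpha> \<bullet> x)) = 0"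
    if a: "\<alpha> \<in> Rp" for \<alpha>
  proof -
    have nz: "\<alpha> \<bullet> x \<noteq> 0" using x a unfolding regular_set_def by auto
    have "dkHy1 \<kappa> y \<alpha> (\<alpha> \<bullet> x) + \<kappa> \<alpha> * (1 - dkF (\<kappa> \<alpha>) (- ((\<alpha> \<bullet> y) / 2 * (\<alpha> \<bullet> x))) / dkF (\<kappa> \<alpha>) ((\<alpha> \<bullet> y) / 2 * (\<alpha> \<bullet> x))) / (\<alpha> \<bullet> x) = 0"
      unfolding dkHy1_def by (rule dk_key[OF kpos[OF a] nz])
    from arg_cong[OF this, of "\<lambda>t. (\<alpha> \<bullet> \<xi>) * t"] show ?thesis by (simp only: distrib_left mult_zero_right)
  qed
  have "dunkl_op Rp \<kappa> \<xi> (\<lambda>z. dkEk Rp \<kappa> z y) x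
      = ?E * (\<xi> \<bullet> y + (\<Sum>\<beta>\<in>Rp. (\<beta> \<bullet> \<xi>) * dkHy1 \<kappa> y \<beta> (\<beta> \<bullet> x)))
        + ?E * (\<Sum>\<alpha>\<in>Rp. (\<alpha> \<bullet> \<xi>) * (\<kappa> \<alpha> * (1 - dkF (\<kappa> \<alpha>) (- ((\<alpha> \<bullet> y) / 2 * (\<alpha> \<bullet> x))) / dkF (\<kappa> \<alpha>) ((\<alpha> \<bullet> y) / 2 * (\<alpha> \<bullet> x))) / (\<alpha> \<bullet> x)))"
    unfolding dunkl_op_def Ek_frechet by (simp add: t sum_distrib_left cong: sum.cong)
  also have "\<dots> = ?E * (\<xi> \<bullet> y + (\<Sum>\<beta>\<in>Rp. (\<beta> \<bullet> \<xi>) * dkHy1 \<kappa> y \<beta> (\<beta> \<bullet> x) + (\<beta> \<bullet> \<xi>) * (\<kappa> \<beta> * (1 - dkF (\<kappa> \<beta>) (- ((\<beta> \<bullet> y) / 2 * (\<beta> \<bullet> x))) / dkF (\<kappa> \<beta>) ((\<beta> \<bullet> y) / 2 * (\<beta> \<bullet> x))) / (\<beta> \<bullet> x))))"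
    by (simp add: sum.distrib algebra_simps)
  also have "\<dots> = ?E * (\<xi> \<bullet> y)" using z by simp
  finally show ?thesis by (simp add: mult.commute)
qed

lemma Ek_pos: "dkEk Rp \<kappa> x y > 0" by (simp add: dkEk_def)

end


lemma refl_adj: "refl \<gamma> u \<bullet> v = u \<bullet> refl \<gamma> v"
proof -
  have c: "u \<bullet> \<gamma> = \<gamma> \<bullet> u" by (rule inner_commute)
  show ?thesis unfolding refl_def inner_diff_left inner_diff_right inner_scaleR_left inner_scaleR_right c
    by simp
qed

lemma refl_scale: "refl \<gamma> (t *\<^sub>R v) = t *\<^sub>R refl \<gamma> v"
  unfolding refl_def by (simp add: scaleR_diff_right)

lemma rgs_adj:
  assumes "g \<in> refl_group_set R" "\<forall>\<alpha>\<in>R. refl \<alpha> ` R = R"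
  shows "\<forall>\<alpha>\<in>R. \<exists>\<beta>\<in>R. \<forall>x. \<alpha> \<bullet> g x = \<beta> \<bullet> x"
  using assms(1)
proof induction
  case id_in then show ?case by auto
next
  case (step \<gamma> g)
  show ?case
  proof
    fix \<alpha> assume a: "\<alpha> \<in> R"
    have "refl \<gamma> \<alpha> \<in> R" using assms(2) step(1) a by blast
    then obtain \<beta> where b: "\<beta> \<in> R" "\<forall>x. refl \<gamma> \<alpha> \<bullet> g x = \<beta> \<bullet> x" using step(3) by blast
    have "\<forall>x. \<alpha> \<bullet> (refl \<gamma> \<circ> g) x = \<beta> \<bullet> x"
    proof
      fix x show "\<alpha> \<bullet> (refl \<gamma> \<circ> g) x = \<beta> \<bullet> x" using b(2) refl_adj[of \<gamma> \<alpha> "g x"] by simp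
    qed
    then show "\<exists>\<beta>\<in>R. \<forall>x. \<alpha> \<bullet> (refl \<gamma> \<circ> g) x = \<beta> \<bullet> x" using b(1) by blast
  qed
qed

lemma rgs_scale:
  assumes "g \<in> refl_group_set R"
  shows "g (t *\<^sub>R v) = t *\<^sub>R g v"
  using assms by induction (auto simp: refl_scale)

context osys begin

lemma regular_scale: "x \<in> regular_set Rp \<Longrightarrow> t \<noteq> 0 \<Longrightarrow> t *\<^sub>R x \<in> regular_set Rp"
  unfolding regular_set_def by auto

lemma refl_invol: assumes a: "\<alpha> \<in> Rp" shows "refl \<alpha> (refl \<alpha> x) = x"
proof -
  have "\<alpha> \<bullet> refl \<alpha> x = - (\<alpha> \<bullet> x)" by (rule inner_refl_self[OF a])
  then show ?thesis unfolding refl_eq[OF a, of "refl \<alpha> x"] by (simp add: refl_eq[OF a])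
qed

definition vreg :: 'a where "vreg = (\<Sum>\<beta>\<in>Rp. \<beta>)"

lemma inner_vreg: "\<beta> \<in> Rp \<Longrightarrow> \<beta> \<bullet> vreg = 2"
proof -
  assume b: "\<beta> \<in> Rp"
  have "\<beta> \<bullet> vreg = (\<Sum>\<gamma>\<in>Rp. \<beta> \<bullet> \<gamma>)" by (simp add: vreg_def inner_sum_right)
  also have "\<dots> = \<beta> \<bullet> \<beta>" by (rule sum_single[OF b]) (use orth b in auto)
  finally show ?thesis using nrm[OF b] by simp
qed

lemma eventually_regular: "\<forall>\<^sub>F e in at_right 0. x + e *\<^sub>R vreg \<in> regular_set Rp"
proof -
  have "\<forall>\<^sub>F e in at_right 0. \<beta> \<bullet> (x + e *\<^sub>R vreg) \<noteq> 0" if b: "\<beta> \<in> Rp" for \<beta>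
  proof (cases "\<beta> \<bullet> x = 0")
    case True
    show ?thesis using eventually_at_right_less[of "0::real"]
    proof (rule eventually_mono)
      fix e :: real assume "0 < e"
      then show "\<beta> \<bullet> (x + e *\<^sub>R vreg) \<noteq> 0" using True by (simp add: inner_add_right inner_vreg[OF b])
    qed
  next
    case False
    have "((\<lambda>e. \<beta> \<bullet> x + 2 * e) \<longlongrightarrow> \<beta> \<bullet> x + 2 * 0) (at_right 0)"
      by (intro tendsto_intros)
    then have "\<forall>\<^sub>F e in at_right 0. \<beta> \<bullet> x + 2 * e \<noteq> 0"
      using False by (intro tendsto_imp_eventually_ne) auto
    then show ?thesis by (rule eventually_mono) (simp add: inner_add_right inner_vreg[OF b])
  qed
  then have "\<forall>\<^sub>F e in at_right 0. \<forall>\<beta>\<in>Rp. \<beta> \<bullet> (x + e *\<^sub>R vreg) \<noteq> 0"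
    using fin by (simp add: eventually_ball_finite)
  then show ?thesis by (simp add: regular_set_def)
qed

lemma tendsto_vreg: "((\<lambda>e. x + e *\<^sub>R vreg) \<longlongrightarrow> x) (at_right 0)"
proof -
  have "((\<lambda>e. x + e *\<^sub>R vreg) \<longlongrightarrow> x + 0 *\<^sub>R vreg) (at_right 0)"
    by (intro tendsto_intros)
  then show ?thesis by simp
qed

lemma zero_on_regular:
  assumes c: "continuous_on UNIV g" and z: "\<And>x. x \<in> regular_set Rp \<Longrightarrow> g x = (0::real)"
  shows "g x = 0"
proof -
  have lim: "((\<lambda>e. g (x + e *\<^sub>R vreg)) \<longlongrightarrow> g x) (at_right 0)"
    by (rule continuous_on_tendsto_compose[OF c tendsto_vreg]) auto
  have ev: "\<forall>\<^sub>F e in at_right 0. g (x + e *\<^sub>R vreg) = 0"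
    using eventually_regular[of x] by (rule eventually_mono) (rule z)
  have "((\<lambda>e. 0) \<longlongrightarrow> g x) (at_right (0::real))"
    using tendsto_cong[OF ev] lim by simp
  from tendsto_unique[OF _ this tendsto_const] show ?thesis by simp
qed

lemma regular_nontrivial: "at x within regular_set Rp \<noteq> bot"
proof (cases "Rp = {}")
  case True
  then have "regular_set Rp = UNIV" by (simp add: regular_set_def)
  then show ?thesis by simp
next
  case False
  then obtain \<beta> where b: "\<beta> \<in> Rp" by blast
  have v: "vreg \<noteq> 0" using inner_vreg[OF b] by auto
  have "filterlim (\<lambda>e. x + e *\<^sub>R vreg) (at x within regular_set Rp) (at_right 0)"
    unfolding filterlim_at
  proof
    show "((\<lambda>e. x + e *\<^sub>R vreg) \<longlongrightarrow> x) (at_right 0)" by (rule tendsto_vreg)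
    have "\<forall>\<^sub>F e in at_right (0::real). 0 < e" by (simp add: eventually_at_right_less)
    with eventually_regular[of x]
    show "\<forall>\<^sub>F e in at_right 0. x + e *\<^sub>R vreg \<in> regular_set Rp \<and> x + e *\<^sub>R vreg \<noteq> x"
      by eventually_elim (use v in auto)
  qed
  show ?thesis
  proof
    assume "at x within regular_set Rp = bot"
    with \<open>filterlim (\<lambda>e. x + e *\<^sub>R vreg) (at x within regular_set Rp) (at_right 0)\<close>
    have "at_right (0::real) = bot" by (simp add: filterlim_def filtermap_bot_iff bot_unique)
    then show False by simp
  qed
qed

end


lemma invol_sum_nonneg:
  fixes f :: "'b \<Rightarrow> real"
  assumes W: "finite W" and im: "\<And>w. w \<in> W \<Longrightarrow> \<sigma> w \<in> W" and inv: "\<And>w. w \<in> W \<Longrightarrow> \<sigma> (\<sigma> w) = w"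
  shows "(\<Sum>w\<in>W. f w * (f w - f (\<sigma> w))) \<ge> 0"
proof -
  have bij: "bij_betw \<sigma> W W"
    by (rule bij_betw_byWitness[where f'=\<sigma>]) (use im inv in auto)
  have re: "(\<Sum>w\<in>W. f (\<sigma> w) ^ 2) = (\<Sum>w\<in>W. f w ^ 2)"
    using sum.reindex_bij_betw[OF bij, of "\<lambda>w. f w ^ 2"] by simp
  have "(\<Sum>w\<in>W. f w * f (\<sigma> w)) \<le> (\<Sum>w\<in>W. (f w ^ 2 + f (\<sigma> w) ^ 2) / 2)"
  proof (rule sum_mono)
    fix w show "f w * f (\<sigma> w) \<le> (f w ^ 2 + f (\<sigma> w) ^ 2) / 2"
      using sum_squares_bound[of "f w" "f (\<sigma> w)"] by (simp add: power2_eq_square)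
  qed
  also have "\<dots> = (\<Sum>w\<in>W. f w ^ 2)"
    by (simp add: sum_divide_distrib[symmetric] sum.distrib re)
  finally have "(\<Sum>w\<in>W. f w * f (\<sigma> w)) \<le> (\<Sum>w\<in>W. f w ^ 2)" .
  moreover have "(\<Sum>w\<in>W. f w * (f w - f (\<sigma> w))) = (\<Sum>w\<in>W. f w ^ 2) - (\<Sum>w\<in>W. f w * f (\<sigma> w))"
    by (simp add: right_diff_distrib sum_subtractf power2_eq_square)
  ultimately show ?thesis by simp
qed

lemma ray_deriv:
  assumes "g differentiable (at (t *\<^sub>R v))"
  shows "((\<lambda>s. g (s *\<^sub>R v)) has_real_derivative frechet_derivative g (at (t *\<^sub>R v)) v) (at t)"
proof -
  have D: "(g has_derivative frechet_derivative g (at (t *\<^sub>R v))) (at (t *\<^sub>R v))"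
    using assms frechet_derivative_works by blast
  have bl: "bounded_linear (frechet_derivative g (at (t *\<^sub>R v)))" using D by (rule has_derivative_bounded_linear)
  have L: "((\<lambda>s. s *\<^sub>R v) has_derivative (\<lambda>h. h *\<^sub>R v)) (at t)"
    by (auto intro!: derivative_eq_intros)
  have "((g \<circ> (\<lambda>s. s *\<^sub>R v)) has_derivative (frechet_derivative g (at (t *\<^sub>R v)) \<circ> (\<lambda>h. h *\<^sub>R v))) (at t)"
    by (rule diff_chain_at[OF L D])
  moreover have "(frechet_derivative g (at (t *\<^sub>R v)) \<circ> (\<lambda>h. h *\<^sub>R v)) = (*) (frechet_derivative g (at (t *\<^sub>R v)) v)"
    using linear_simps(5)[OF bl] by (auto simp: fun_eq_iff)
  ultimately show ?thesis unfolding has_field_derivative_def by (simp add: o_def)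
qed

locale osysR = osys Rp \<kappa> for Rp :: "'a::euclidean_space set" and \<kappa> +
  fixes R :: "'a set"
  assumes RpR: "Rp \<subseteq> R" and Rsplit: "R \<subseteq> Rp \<union> uminus ` Rp"
    and Rinv: "\<forall>\<alpha>\<in>R. refl \<alpha> ` R = R" and Wfin: "finite (refl_group_set R)"
begin

lemma W_regular:
  assumes w: "w \<in> refl_group_set R" and x: "x \<in> regular_set Rp"
  shows "w x \<in> regular_set Rp"
  unfolding regular_set_def
proof safe
  fix \<alpha> assume a: "\<alpha> \<in> Rp" and z: "\<alpha> \<bullet> w x = 0"
  from a RpR have "\<alpha> \<in> R" by auto
  with rgs_adj[OF w Rinv] obtain \<beta> where b: "\<beta> \<in> R" "\<forall>x. \<alpha> \<bullet> w x = \<beta> \<bullet> x" by blast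
  from b(1) Rsplit have "\<beta> \<in> Rp \<or> (\<exists>\<gamma>\<in>Rp. \<beta> = - \<gamma>)" by auto
  then show False
  proof
    assume "\<beta> \<in> Rp" then show False using x z b(2) unfolding regular_set_def by auto
  next
    assume "\<exists>\<gamma>\<in>Rp. \<beta> = - \<gamma>"
    then obtain \<gamma> where "\<gamma> \<in> Rp" "\<beta> = - \<gamma>" by blast
    then show False using x z b(2) unfolding regular_set_def by auto
  qed
qed

lemma kernel_unique:
  fixes g :: "'a \<Rightarrow> real"
  assumes C1: "C1_fun g" and g0: "g 0 = 0"
    and eq: "\<And>\<xi> x. x \<in> regular_set Rp \<Longrightarrow>
      frechet_derivative g (at x) \<xi> + (\<Sum>\<alpha>\<in>Rp. \<kappa> \<alpha> * (\<alpha> \<bullet> \<xi>) * (g x - g (refl \<alpha> x)) / (\<alpha> \<bullet> x)) = (\<xi> \<bullet> y) * g x"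
  shows "g x = 0"
proof -
  have diff: "\<And>p. g differentiable (at p)" using C1 unfolding C1_fun_def by blast
  have cont: "continuous_on UNIV g"
    by (rule continuous_at_imp_continuous_on) (auto intro!: differentiable_imp_continuous_within diff)
  show ?thesis
  proof (rule zero_on_regular[OF cont])
    fix x0 assume x0: "x0 \<in> regular_set Rp"
    define W where "W = refl_group_set R"
    have finW: "finite W" using Wfin W_def by simp
    define u where "u w t = g (t *\<^sub>R w x0)" for w t
    define u' where "u' w t = frechet_derivative g (at (t *\<^sub>R w x0)) (w x0)" for w t
    have du: "((u w) has_real_derivative u' w t) (at t)" for w t
      unfolding u_def[abs_def] u'_def by (rule ray_deriv[OF diff])
    have reg: "w x0 \<in> regular_set Rp" if "w \<in> W" for w using W_regular[OF _ x0] that W_def by simp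
    have ode: "u' w t = (w x0 \<bullet> y) * u w t - (1 / t) * (\<Sum>\<alpha>\<in>Rp. \<kappa> \<alpha> * (u w t - u (refl \<alpha> \<circ> w) t))"
      if w: "w \<in> W" and t: "t > 0" for w t
    proof -
      have pr: "t *\<^sub>R w x0 \<in> regular_set Rp" using regular_scale[OF reg[OF w]] t by simp
      have e: "u' w t + (\<Sum>\<alpha>\<in>Rp. \<kappa> \<alpha> * (\<alpha> \<bullet> w x0) * (u w t - u (refl \<alpha> \<circ> w) t) / (\<alpha> \<bullet> (t *\<^sub>R w x0))) = (w x0 \<bullet> y) * u w t"
        using eq[OF pr, of "w x0"] unfolding u_def u'_def by (simp add: refl_scale)
      have s: "(\<Sum>\<alpha>\<in>Rp. \<kappa> \<alpha> * (\<alpha> \<bullet> w x0) * (u w t - u (refl \<alpha> \<circ> w) t) / (\<alpha> \<bullet> (t *\<^sub>R w x0)))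
          = (1 / t) * (\<Sum>\<alpha>\<in>Rp. \<kappa> \<alpha> * (u w t - u (refl \<alpha> \<circ> w) t))"
        unfolding sum_distrib_left
      proof (rule sum.cong[OF refl])
        fix \<alpha> assume a: "\<alpha> \<in> Rp"
        have nz: "\<alpha> \<bullet> w x0 \<noteq> 0" using reg[OF w] a unfolding regular_set_def by auto
        show "\<kappa> \<alpha> * (\<alpha> \<bullet> w x0) * (u w t - u (refl \<alpha> \<circ> w) t) / (\<alpha> \<bullet> (t *\<^sub>R w x0)) = 1 / t * (\<kappa> \<alpha> * (u w t - u (refl \<alpha> \<circ> w) t))"
          using nz t by (simp add: field_simps)
      qed
      show ?thesis using e s by linarith
    qed
    define S where "S t = (\<Sum>w\<in>W. (u w t)\<^sup>2)" for t
    define M where "M = (\<Sum>w\<in>W. \<bar>w x0 \<bullet> y\<bar>)"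
    have M: "\<bar>w x0 \<bullet> y\<bar> \<le> M" if "w \<in> W" for w
      unfolding M_def by (rule member_le_sum) (use that finW in auto)
    have dS: "(S has_real_derivative (\<Sum>w\<in>W. 2 * u w t * u' w t)) (at t)" for t
      unfolding S_def[abs_def]
      by (rule DERIV_sum) (auto intro!: derivative_eq_intros du simp: power2_eq_square)
    have Sbound: "(\<Sum>w\<in>W. 2 * u w t * u' w t) \<le> 2 * M * S t" if t: "t > 0" for t
    proof -
      have "(\<Sum>w\<in>W. 2 * u w t * u' w t) = (\<Sum>w\<in>W. 2 * (w x0 \<bullet> y) * (u w t)\<^sup>2) - (2 / t) * (\<Sum>\<alpha>\<in>Rp. \<kappa> \<alpha> * (\<Sum>w\<in>W. u w t * (u w t - u (refl \<alpha> \<circ> w) t)))"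
      proof -
        have "(\<Sum>w\<in>W. 2 * u w t * u' w t) = (\<Sum>w\<in>W. 2 * (w x0 \<bullet> y) * (u w t)\<^sup>2 - (2 / t) * (\<Sum>\<alpha>\<in>Rp. \<kappa> \<alpha> * (u w t * (u w t - u (refl \<alpha> \<circ> w) t))))"
          by (rule sum.cong[OF refl]) (simp add: ode t power2_eq_square sum_distrib_left algebra_simps)
        also have "\<dots> = (\<Sum>w\<in>W. 2 * (w x0 \<bullet> y) * (u w t)\<^sup>2) - (2 / t) * (\<Sum>w\<in>W. \<Sum>\<alpha>\<in>Rp. \<kappa> \<alpha> * (u w t * (u w t - u (refl \<alpha> \<circ> w) t)))"
          by (simp add: sum_subtractf sum_distrib_left)
        also have "(\<Sum>w\<in>W. \<Sum>\<alpha>\<in>Rp. \<kappa> \<alpha> * (u w t * (u w t - u (refl \<alpha> \<circ> w) t))) = (\<Sum>\<alpha>\<in>Rp. \<kappa> \<alpha> * (\<Sum>w\<in>W. u w t * (u w t - u (refl \<alpha> \<circ> w) t)))"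
          by (subst sum.swap) (simp add: sum_distrib_left)
        finally show ?thesis .
      qed
      also have "\<dots> \<le> (\<Sum>w\<in>W. 2 * (w x0 \<bullet> y) * (u w t)\<^sup>2)"
      proof -
        have "0 \<le> (\<Sum>\<alpha>\<in>Rp. \<kappa> \<alpha> * (\<Sum>w\<in>W. u w t * (u w t - u (refl \<alpha> \<circ> w) t)))"
        proof (rule sum_nonneg)
          fix \<alpha> assume a: "\<alpha> \<in> Rp"
          have "0 \<le> (\<Sum>w\<in>W. u w t * (u w t - u (refl \<alpha> \<circ> w) t))"
          proof (rule invol_sum_nonneg[OF finW, where \<sigma>="\<lambda>w. refl \<alpha> \<circ> w" and f="\<lambda>w. u w t"])
            fix w assume "w \<in> W"
            then show "refl \<alpha> \<circ> w \<in> W" unfolding W_def using a RpR by (auto intro: refl_group_set.step)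
            show "refl \<alpha> \<circ> (refl \<alpha> \<circ> w) = w" by (auto simp: fun_eq_iff refl_invol[OF a])
          qed
          then show "0 \<le> \<kappa> \<alpha> * (\<Sum>w\<in>W. u w t * (u w t - u (refl \<alpha> \<circ> w) t))" using kpos[OF a] by simp
        qed
        then show ?thesis using t by simp
      qed
      also have "\<dots> \<le> (\<Sum>w\<in>W. 2 * M * (u w t)\<^sup>2)"
      proof (rule sum_mono)
        fix w assume w: "w \<in> W"
        have "(w x0 \<bullet> y) \<le> M" using M[OF w] by simp
        then show "2 * (w x0 \<bullet> y) * (u w t)\<^sup>2 \<le> 2 * M * (u w t)\<^sup>2" by (simp add: mult_right_mono)
      qed
      also have "\<dots> = 2 * M * S t" unfolding S_def by (simp add: sum_distrib_left)
      finally show ?thesis .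
    qed
    define h where "h t = - (exp (- 2 * M * t) * S t)" for t
    have contS: "continuous_on {0..1} S"
      by (rule continuous_at_imp_continuous_on) (auto intro: DERIV_isCont[OF dS])
    have "h 0 \<le> h 1"
    proof (rule DERIV_nonneg_imp_increasing_open[of 0 1 h])
      show "continuous_on {0..1} h" unfolding h_def using contS by (auto intro!: continuous_intros)
      fix t :: real assume t: "0 < t" "t < 1"
      have "(h has_real_derivative - (- 2 * M * exp (- 2 * M * t) * S t + exp (- 2 * M * t) * (\<Sum>w\<in>W. 2 * u w t * u' w t))) (at t)"
        unfolding h_def[abs_def] by (auto intro!: derivative_eq_intros dS simp: algebra_simps)
      moreover have "0 \<le> - (- 2 * M * exp (- 2 * M * t) * S t + exp (- 2 * M * t) * (\<Sum>w\<in>W. 2 * u w t * u' w t))"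
      proof -
        have "exp (- 2 * M * t) * (\<Sum>w\<in>W. 2 * u w t * u' w t) \<le> exp (- 2 * M * t) * (2 * M * S t)"
          using Sbound[of t] t by (intro mult_left_mono) auto
        then show ?thesis by (simp add: algebra_simps)
      qed
      ultimately show "\<exists>y. (h has_real_derivative y) (at t) \<and> 0 \<le> y" by blast
    qed simp
    moreover have "S 0 = 0" unfolding S_def u_def using g0 by simp
    ultimately have "exp (- 2 * M) * S 1 \<le> 0" unfolding h_def by simp
    then have S1: "S 1 \<le> 0" by (simp add: mult_le_0_iff)
    have "id \<in> W" unfolding W_def by (rule refl_group_set.id_in)
    then have "(u id 1)\<^sup>2 \<le> S 1" unfolding S_def
      by (rule member_le_sum) (use finW in auto)
    with S1 have "(u id 1)\<^sup>2 \<le> 0" by linarith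
    then have "u id 1 = 0" by (simp add: power2_eq_square mult_le_0_iff) (smt (verit) zero_le_square)
    then show "g x0 = 0" unfolding u_def by simp
  qed
qed

end


context osysR begin

lemma dunkl_kernel_eq: "dunkl_kernel Rp \<kappa> = dkEk Rp \<kappa>"
  unfolding dunkl_kernel_def
proof (rule the_equality)
  show "\<forall>y. C1_fun (\<lambda>x. dkEk Rp \<kappa> x y) \<and> dkEk Rp \<kappa> 0 y = 1 \<and>
      (\<forall>\<xi>. \<forall>x\<in>regular_set Rp. dunkl_op Rp \<kappa> \<xi> (\<lambda>z. dkEk Rp \<kappa> z y) x = (\<xi> \<bullet> y) * dkEk Rp \<kappa> x y)"
    using Ek_C1 Ek_0 Ek_equation by blast
next
  fix E assume E: "\<forall>y. C1_fun (\<lambda>x. E x y) \<and> E 0 y = 1 \<and>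
      (\<forall>\<xi>. \<forall>x\<in>regular_set Rp. dunkl_op Rp \<kappa> \<xi> (\<lambda>z. E z y) x = (\<xi> \<bullet> y) * E x y)"
  show "E = dkEk Rp \<kappa>"
  proof (rule ext, rule ext)
    fix x y
    define g where "g z = E z y - dkEk Rp \<kappa> z y" for z
    have dE: "(\<lambda>z. E z y) differentiable (at p)" for p using E unfolding C1_fun_def by blast
    have DE: "((\<lambda>z. E z y) has_derivative frechet_derivative (\<lambda>z. E z y) (at p)) (at p)" for p
      using dE frechet_derivative_works by blast
    have Dg: "(g has_derivative (\<lambda>h. frechet_derivative (\<lambda>z. E z y) (at p) h - frechet_derivative (\<lambda>z. dkEk Rp \<kappa> z y) (at p) h)) (at p)" for p
      unfolding g_def[abs_def] by (rule has_derivative_diff[OF DE]) (simp add: Ek_frechet Ek_has_derivative)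
    have fg: "frechet_derivative g (at p) = (\<lambda>h. frechet_derivative (\<lambda>z. E z y) (at p) h - frechet_derivative (\<lambda>z. dkEk Rp \<kappa> z y) (at p) h)" for p
      using Dg by (rule frechet_derivative_at[symmetric])
    have C1: "C1_fun g"
      unfolding C1_fun_def
    proof safe
      fix p show "g differentiable at p" using Dg by (auto simp: differentiable_def)
    next
      fix v
      have c1: "continuous_on UNIV (\<lambda>p. frechet_derivative (\<lambda>z. E z y) (at p) v)" using E unfolding C1_fun_def by blast
      have c2: "continuous_on UNIV (\<lambda>p. frechet_derivative (\<lambda>z. dkEk Rp \<kappa> z y) (at p) v)" using Ek_C1 unfolding C1_fun_def by blast
      show "continuous_on UNIV (\<lambda>p. frechet_derivative g (at p) v)"
        unfolding fg using c1 c2 by (auto intro!: continuous_intros)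
    qed
    have g0: "g 0 = 0" unfolding g_def using E Ek_0 by simp
    have eq: "frechet_derivative g (at p) \<xi> + (\<Sum>\<alpha>\<in>Rp. \<kappa> \<alpha> * (\<alpha> \<bullet> \<xi>) * (g p - g (refl \<alpha> p)) / (\<alpha> \<bullet> p)) = (\<xi> \<bullet> y) * g p"
      if p: "p \<in> regular_set Rp" for \<xi> p
    proof -
      have e1: "dunkl_op Rp \<kappa> \<xi> (\<lambda>z. E z y) p = (\<xi> \<bullet> y) * E p y" using E p by blast
      have e2: "dunkl_op Rp \<kappa> \<xi> (\<lambda>z. dkEk Rp \<kappa> z y) p = (\<xi> \<bullet> y) * dkEk Rp \<kappa> p y" using Ek_equation p by blast
      have "frechet_derivative g (at p) \<xi> + (\<Sum>\<alpha>\<in>Rp. \<kappa> \<alpha> * (\<alpha> \<bullet> \<xi>) * (g p - g (refl \<alpha> p)) / (\<alpha> \<bullet> p))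
          = dunkl_op Rp \<kappa> \<xi> (\<lambda>z. E z y) p - dunkl_op Rp \<kappa> \<xi> (\<lambda>z. dkEk Rp \<kappa> z y) p"
      proof -
        have "(\<Sum>\<alpha>\<in>Rp. \<kappa> \<alpha> * (\<alpha> \<bullet> \<xi>) * (g p - g (refl \<alpha> p)) / (\<alpha> \<bullet> p))
          = (\<Sum>\<alpha>\<in>Rp. \<kappa> \<alpha> * (\<alpha> \<bullet> \<xi>) * (E p y - E (refl \<alpha> p) y) / (\<alpha> \<bullet> p)
                 - \<kappa> \<alpha> * (\<alpha> \<bullet> \<xi>) * (dkEk Rp \<kappa> p y - dkEk Rp \<kappa> (refl \<alpha> p) y) / (\<alpha> \<bullet> p))"
        proof (rule sum.cong[OF refl])
          fix \<alpha> assume a: "\<alpha> \<in> Rp"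
          have nz: "\<alpha> \<bullet> p \<noteq> 0" using p a unfolding regular_set_def by auto
          show "\<kappa> \<alpha> * (\<alpha> \<bullet> \<xi>) * (g p - g (refl \<alpha> p)) / (\<alpha> \<bullet> p)
             = \<kappa> \<alpha> * (\<alpha> \<bullet> \<xi>) * (E p y - E (refl \<alpha> p) y) / (\<alpha> \<bullet> p)
                 - \<kappa> \<alpha> * (\<alpha> \<bullet> \<xi>) * (dkEk Rp \<kappa> p y - dkEk Rp \<kappa> (refl \<alpha> p) y) / (\<alpha> \<bullet> p)"
            unfolding g_def using nz by (simp add: field_simps)
        qed
        then show ?thesis unfolding dunkl_op_def fg by (simp add: sum_subtractf)
      qed
      also have "\<dots> = (\<xi> \<bullet> y) * g p" unfolding e1 e2 g_def by (simp add: algebra_simps)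
      finally show ?thesis .
    qed
    have "g x = 0" by (rule kernel_unique[OF C1 g0 eq])
    then show "E x y = dkEk Rp \<kappa> x y" unfolding g_def by simp
  qed
qed

end


lemma rgs_refl: "\<alpha> \<in> R \<Longrightarrow> refl \<alpha> \<in> refl_group_set R"
  using refl_group_set.step[OF _ refl_group_set.id_in, of \<alpha> R] by simp

lemma rgs_comp:
  assumes a: "a \<in> refl_group_set R" and b: "b \<in> refl_group_set R"
  shows "a \<circ> b \<in> refl_group_set R"
  using a
proof induction
  case id_in then show ?case using b by simp
next
  case (step \<alpha> g)
  from step(3) have "g \<circ> b \<in> refl_group_set R" .
  from refl_group_set.step[OF step(1) this] show ?case by (simp only: o_assoc)
qed

lemma Z2_comm: "x \<otimes>\<^bsub>Z2_pow d\<^esub> y = y \<otimes>\<^bsub>Z2_pow d\<^esub> x"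
  by (simp add: Z2_pow_def add.commute)

lemma Z2_finite: "finite (carrier (Z2_pow d))"
  by (auto simp: Z2_pow_def carrier_integer_mod_group intro!: finite_PiE)

lemma refl_group_comm:
  assumes "refl_group R \<cong> Z2_pow d" and "a \<in> refl_group_set R" "b \<in> refl_group_set R"
  shows "a \<circ> b = b \<circ> a"
proof -
  obtain h where h: "h \<in> iso (refl_group R) (Z2_pow d)" using assms(1) unfolding is_iso_def by blast
  have hom: "h \<in> hom (refl_group R) (Z2_pow d)" and inj: "inj_on h (refl_group_set R)"
    using h unfolding iso_def bij_betw_def by (auto simp: refl_group_def)
  have hm: "h (x \<circ> y) = h x \<otimes>\<^bsub>Z2_pow d\<^esub> h y" if "x \<in> refl_group_set R" "y \<in> refl_group_set R" for x y
    using hom that unfolding hom_def by (auto simp: refl_group_def)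
  have "h (a \<circ> b) = h (b \<circ> a)" using hm[OF assms(2,3)] hm[OF assms(3,2)] Z2_comm by metis
  then show ?thesis using inj rgs_comp assms(2,3) by (meson inj_on_def)
qed

lemma refl_group_finite:
  assumes "refl_group R \<cong> Z2_pow d" shows "finite (refl_group_set R)"
  using iso_finite[OF assms] Z2_finite by (simp add: refl_group_def)

lemma commuting_refl_orth:
  assumes rs: "root_system R" and n2: "\<forall>\<alpha>\<in>R. (norm \<alpha>)\<^sup>2 = 2"
    and a: "\<alpha> \<in> R" and b: "\<beta> \<in> R" and c: "refl \<alpha> \<circ> refl \<beta> = refl \<beta> \<circ> refl \<alpha>"
  shows "\<alpha> \<bullet> \<beta> = 0 \<or> \<alpha> = \<beta> \<or> \<alpha> = - \<beta>"
proof (rule ccontr)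
  assume nc: "\<not> (\<alpha> \<bullet> \<beta> = 0 \<or> \<alpha> = \<beta> \<or> \<alpha> = - \<beta>)"
  have aa: "\<alpha> \<bullet> \<alpha> = 2" using n2 a by (simp add: power2_norm_eq_inner)
  have bb: "\<beta> \<bullet> \<beta> = 2" using n2 b by (simp add: power2_norm_eq_inner)
  let ?c = "\<alpha> \<bullet> \<beta>"
  have e: "refl \<alpha> (refl \<beta> \<beta>) = refl \<beta> (refl \<alpha> \<beta>)" using c by (metis comp_apply)
  have l: "refl \<alpha> (refl \<beta> \<beta>) = - \<beta> + ?c *\<^sub>R \<alpha>"
    using aa bb by (simp add: refl_eq2 inner_diff_right inner_commute algebra_simps scaleR_2)
  have r: "refl \<beta> (refl \<alpha> \<beta>) = - \<beta> - ?c *\<^sub>R \<alpha> + (?c * ?c) *\<^sub>R \<beta>"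
    using aa bb by (simp add: refl_eq2 inner_diff_right inner_commute algebra_simps scaleR_2)
  have h1: "?c *\<^sub>R \<alpha> + ?c *\<^sub>R \<alpha> = (?c * ?c) *\<^sub>R \<beta>" using e l r by (simp add: algebra_simps)
  have "(2 * ?c) *\<^sub>R \<alpha> = ?c *\<^sub>R \<alpha> + ?c *\<^sub>R \<alpha>" by (simp add: scaleR_left_distrib[symmetric])
  with h1 have "(2 * ?c) *\<^sub>R \<alpha> = (?c * ?c) *\<^sub>R \<beta>" by simp
  then have h2: "(1 / (2 * ?c)) *\<^sub>R ((2 * ?c) *\<^sub>R \<alpha>) = (1 / (2 * ?c)) *\<^sub>R ((?c * ?c) *\<^sub>R \<beta>)" by simp
  have cnz: "?c \<noteq> 0" using nc by simp
  have "\<alpha> = (1 / (2 * ?c)) *\<^sub>R ((2 * ?c) *\<^sub>R \<alpha>)" using cnz by simp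
  also have "\<dots> = (?c / 2) *\<^sub>R \<beta>" unfolding h2 using cnz by simp
  finally have "\<alpha> = (?c / 2) *\<^sub>R \<beta>" .
  then have "(?c / 2) *\<^sub>R \<beta> \<in> R" using a by simp
  then have "?c / 2 = 1 \<or> ?c / 2 = -1" using rs b unfolding root_system_def by blast
  then show False using \<open>\<alpha> = (?c / 2) *\<^sub>R \<beta>\<close> nc by auto
qed

lemma setup_osysR:
  fixes R Rp :: "'a::euclidean_space set" and \<kappa> :: "'a \<Rightarrow> real"
  assumes rs: "root_system R"
    and n2: "\<forall>\<alpha>\<in>R. (norm \<alpha>)\<^sup>2 = 2"
    and ps: "positive_subsystem R Rp"
    and mf: "multiplicity_function R \<kappa>"
    and iso: "refl_group R \<cong> Z2_pow DIM('a)"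
  shows "osysR Rp \<kappa> R"
proof -
  have RpR: "Rp \<subseteq> R" and Rs: "R = Rp \<union> uminus ` Rp" and dis: "Rp \<inter> uminus ` Rp = {}"
    using ps unfolding positive_subsystem_def by auto
  have finR: "finite R" using rs unfolding root_system_def by simp
  have orth: "\<beta> \<bullet> \<gamma> = 0" if b: "\<beta> \<in> Rp" and g: "\<gamma> \<in> Rp" and ne: "\<beta> \<noteq> \<gamma>" for \<beta> \<gamma>
  proof -
    have bR: "\<beta> \<in> R" and gR: "\<gamma> \<in> R" using b g RpR by auto
    have "refl \<beta> \<circ> refl \<gamma> = refl \<gamma> \<circ> refl \<beta>"
      by (rule refl_group_comm[OF iso rgs_refl[OF bR] rgs_refl[OF gR]])
    from commuting_refl_orth[OF rs n2 bR gR this]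
    have "\<beta> \<bullet> \<gamma> = 0 \<or> \<beta> = \<gamma> \<or> \<beta> = - \<gamma>" .
    moreover have "\<beta> \<noteq> - \<gamma>"
    proof
      assume "\<beta> = - \<gamma>"
      then have "\<beta> \<in> uminus ` Rp" using g by auto
      then show False using dis b by auto
    qed
    ultimately show ?thesis using ne by auto
  qed
  show ?thesis
  proof (unfold_locales)
    show "finite Rp" using finR RpR finite_subset by blast
    show "\<And>\<beta>. \<beta> \<in> Rp \<Longrightarrow> \<beta> \<bullet> \<beta> = 2" using n2 RpR by (auto simp: power2_norm_eq_inner)
    show "\<And>\<beta> \<gamma>. \<beta> \<in> Rp \<Longrightarrow> \<gamma> \<in> Rp \<Longrightarrow> \<beta> \<noteq> \<gamma> \<Longrightarrow> \<beta> \<bullet> \<gamma> = 0" by (rule orth)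
    show "\<And>\<beta>. \<beta> \<in> Rp \<Longrightarrow> 0 \<le> \<kappa> \<beta>" using mf RpR unfolding multiplicity_function_def by auto
    show "Rp \<subseteq> R" by (rule RpR)
    show "R \<subseteq> Rp \<union> uminus ` Rp" using Rs by simp
    show "\<forall>\<alpha>\<in>R. refl \<alpha> ` R = R" using rs unfolding root_system_def by simp
    show "finite (refl_group_set R)" by (rule refl_group_finite[OF iso])
  qed
qed


lemma psi_eq:
  assumes k: "k \<ge> 0" and s: "s \<noteq> 0"
  shows "2 * (c ^ 2 * dkG2 k (c * s)) + 2 * k * (2 * (c * dkG1 k (c * s) - c) / s
      - ((dkG k (c * s) - c * s) - (dkG k (c * - s) - c * - s)) / s ^ 2) = 2 * c ^ 2 * dkTh k (c * s)"
proof (cases "c = 0")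
  case True then show ?thesis by simp
next
  case False
  then have cs: "c * s \<noteq> 0" using s by simp
  show ?thesis unfolding dkTh_def dkT_def using cs s False
    by (simp add: field_simps power2_eq_square)
qed

context osys begin

lemma dl_eq_cont:
  assumes eq: "\<And>z. z \<in> regular_set Rp \<Longrightarrow> dunkl_laplacian_raw Rp \<kappa> f z = \<Psi> z"
    and c: "\<And>z. isCont \<Psi> z"
  shows "dunkl_laplacian Rp \<kappa> f x = \<Psi> x"
proof (cases "x \<in> regular_set Rp")
  case True then show ?thesis unfolding dunkl_laplacian_def using eq by simp
next
  case False
  have ev: "\<forall>\<^sub>F z in at x within regular_set Rp. \<Psi> z = dunkl_laplacian_raw Rp \<kappa> f z"
    by (auto simp: eventually_at_filter eq intro!: always_eventually)
  have "(\<Psi> \<longlongrightarrow> \<Psi> x) (at x within regular_set Rp)"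
    using c[of x] unfolding isCont_def by (rule tendsto_within_subset) simp
  then have "(dunkl_laplacian_raw Rp \<kappa> f \<longlongrightarrow> \<Psi> x) (at x within regular_set Rp)"
    using tendsto_cong[OF ev] by simp
  then show ?thesis unfolding dunkl_laplacian_def using False
    by (simp add: tendsto_Lim[OF regular_nontrivial])
qed

lemma lambda_nonneg: "lambda_k Rp \<kappa> \<ge> 0"
  unfolding lambda_k_def using kpos by (simp add: sum_nonneg)

lemma const_case:
  assumes t: "t > 0"
  shows "- dunkl_laplacian Rp \<kappa> (\<lambda>z. C) x \<le> (real DIM('a) + 2 * lambda_k Rp \<kappa>) / (2 * t)"
proof -
  have fe: "(\<lambda>z. C) = fgen C 0 0 (\<lambda>\<beta> s. 0)" by (rule ext) (simp add: fgen_def)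
  have "dunkl_laplacian Rp \<kappa> (\<lambda>z. C) x = (\<lambda>z. 0) x"
  proof (rule dl_eq_cont)
    fix z assume z: "z \<in> regular_set Rp"
    have "dunkl_laplacian_raw Rp \<kappa> (fgen C 0 0 (\<lambda>\<beta> s. 0)) z = - 2 * 0 * (real DIM('a) + 2 * lambda_k Rp \<kappa>) +
      (\<Sum>\<alpha>\<in>Rp. 2 * (\<lambda>\<beta> s. 0) \<alpha> (\<alpha> \<bullet> z) + 2 * \<kappa> \<alpha> * (2 * (\<lambda>\<beta> s. 0) \<alpha> (\<alpha> \<bullet> z) / (\<alpha> \<bullet> z)
        - ((\<lambda>\<beta> s. 0) \<alpha> (\<alpha> \<bullet> z) - (\<lambda>\<beta> s. 0) \<alpha> (- (\<alpha> \<bullet> z))) / (\<alpha> \<bullet> z) ^ 2))"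
      by (rule fgen_dunkl_raw[OF _ _ z]) auto
    then show "dunkl_laplacian_raw Rp \<kappa> (\<lambda>z. C) z = 0" unfolding fe by simp
  qed simp
  then show ?thesis using t lambda_nonneg by simp
qed

end


lemma macdonald_nonneg: "macdonald_const Rp \<kappa> \<ge> 0"
proof -
  have nn: "0 \<le> exp (- (norm x)\<^sup>2 / 2) * dunkl_weight Rp \<kappa> x" for x :: 'a
    unfolding dunkl_weight_def by (auto intro!: mult_nonneg_nonneg prod_nonneg)
  show ?thesis
  proof (cases "(\<lambda>x::'a. exp (- (norm x)\<^sup>2 / 2) * dunkl_weight Rp \<kappa> x) integrable_on UNIV")
    case True then show ?thesis unfolding macdonald_const_def by (rule integral_nonneg) (rule nn)
  next
    case False then show ?thesis unfolding macdonald_const_def by (simp add: not_integrable_integral)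
  qed
qed

context osysR begin

lemma heat_log_fgen:
  fixes t :: real and y :: 'a
  assumes t: "t > 0" and c: "macdonald_const Rp \<kappa> > 0"
  defines "w \<equiv> (1 / (2 * t)) *\<^sub>R y"
  defines "A \<equiv> (2 * t) powr (- (real DIM('a) / 2 + lambda_k Rp \<kappa>)) / macdonald_const Rp \<kappa>"
  shows "(\<lambda>z. ln (dunkl_heat_kernel Rp \<kappa> t z y)) = fgen (ln A - (norm y)\<^sup>2 / (4 * t)) (1 / (4 * t)) w (dkHy \<kappa> w)"
proof (rule ext)
  fix z
  have Ap: "A > 0" unfolding A_def using c t by simp
  define r where "r = sqrt (2 * t)"
  have r: "r > 0" "r * r = 2 * t" unfolding r_def using t by auto
  have i1: "(z /\<^sub>R r) \<bullet> (y /\<^sub>R r) = z \<bullet> w"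
    unfolding w_def using r by (simp add: field_simps)
  have i2: "dkHy \<kappa> (y /\<^sub>R r) \<beta> (\<beta> \<bullet> (z /\<^sub>R r)) = dkHy \<kappa> w \<beta> (\<beta> \<bullet> z)" for \<beta>
  proof -
    have eq: "(\<beta> \<bullet> (y /\<^sub>R r)) / 2 * (\<beta> \<bullet> (z /\<^sub>R r)) = (\<beta> \<bullet> w) / 2 * (\<beta> \<bullet> z)"
      unfolding w_def using r by (simp add: field_simps)
    show ?thesis unfolding dkHy_def eq by (rule refl)
  qed
  have "dunkl_heat_kernel Rp \<kappa> t z y = A * exp (- ((norm z)\<^sup>2 + (norm y)\<^sup>2) / (4 * t)) * exp (dkPhi Rp \<kappa> (y /\<^sub>R r) (z /\<^sub>R r))"
    unfolding dunkl_heat_kernel_def dunkl_kernel_eq dkEk_def A_def r_def by simp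
  then have "ln (dunkl_heat_kernel Rp \<kappa> t z y) = ln A + (- ((norm z)\<^sup>2 + (norm y)\<^sup>2) / (4 * t)) + dkPhi Rp \<kappa> (y /\<^sub>R r) (z /\<^sub>R r)"
    using Ap by (simp add: ln_mult)
  also have "\<dots> = fgen (ln A - (norm y)\<^sup>2 / (4 * t)) (1 / (4 * t)) w (dkHy \<kappa> w) z"
    unfolding fgen_def dkPhi_def i1 i2 using t by (simp add: power2_norm_eq_inner field_simps)
  finally show "ln (dunkl_heat_kernel Rp \<kappa> t z y) = fgen (ln A - (norm y)\<^sup>2 / (4 * t)) (1 / (4 * t)) w (dkHy \<kappa> w) z" .
qed

lemma main_bound:
  assumes t: "t > 0"
  shows "- dunkl_laplacian Rp \<kappa> (\<lambda>z. ln (dunkl_heat_kernel Rp \<kappa> t z y)) x \<le> (real DIM('a) + 2 * lambda_k Rp \<kappa>) / (2 * t)"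
proof (cases "macdonald_const Rp \<kappa> = 0")
  case True
  then have "(\<lambda>z. ln (dunkl_heat_kernel Rp \<kappa> t z y)) = (\<lambda>z. ln 0)"
    by (simp add: dunkl_heat_kernel_def)
  then show ?thesis using const_case[OF t] by simp
next
  case False
  then have c: "macdonald_const Rp \<kappa> > 0" using macdonald_nonneg[of Rp \<kappa>] by simp
  define w where "w = (1 / (2 * t)) *\<^sub>R y"
  define A where "A = (2 * t) powr (- (real DIM('a) / 2 + lambda_k Rp \<kappa>)) / macdonald_const Rp \<kappa>"
  define C0 where "C0 = ln A - (norm y)\<^sup>2 / (4 * t)"
  have fe: "(\<lambda>z. ln (dunkl_heat_kernel Rp \<kappa> t z y)) = fgen C0 (1 / (4 * t)) w (dkHy \<kappa> w)"
    unfolding C0_def A_def w_def by (rule heat_log_fgen[OF t c])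
  define \<Psi> where "\<Psi> z = - (real DIM('a) + 2 * lambda_k Rp \<kappa>) / (2 * t)
      + (\<Sum>\<alpha>\<in>Rp. 2 * ((\<alpha> \<bullet> w) / 2) ^ 2 * dkTh (\<kappa> \<alpha>) ((\<alpha> \<bullet> w) / 2 * (\<alpha> \<bullet> z)))" for z
  have "dunkl_laplacian Rp \<kappa> (fgen C0 (1 / (4 * t)) w (dkHy \<kappa> w)) x = \<Psi> x"
  proof (rule dl_eq_cont)
    fix z assume z: "z \<in> regular_set Rp"
    have "dunkl_laplacian_raw Rp \<kappa> (fgen C0 (1 / (4 * t)) w (dkHy \<kappa> w)) z =
      - 2 * (1 / (4 * t)) * (real DIM('a) + 2 * lambda_k Rp \<kappa>) +
      (\<Sum>\<alpha>\<in>Rp. 2 * dkHy2 \<kappa> w \<alpha> (\<alpha> \<bullet> z) + 2 * \<kappa> \<alpha> * (2 * dkHy1 \<kappa> w \<alpha> (\<alpha> \<bullet> z) / (\<alpha> \<bullet> z)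
        - (dkHy \<kappa> w \<alpha> (\<alpha> \<bullet> z) - dkHy \<kappa> w \<alpha> (- (\<alpha> \<bullet> z))) / (\<alpha> \<bullet> z) ^ 2))"
      by (rule fgen_dunkl_raw[OF Hy_d1 Hy_d2 z])
    also have "\<dots> = \<Psi> z"
      unfolding \<Psi>_def
    proof (intro arg_cong2[where f="(+)"] sum.cong refl)
      show "- 2 * (1 / (4 * t)) * (real DIM('a) + 2 * lambda_k Rp \<kappa>) = - (real DIM('a) + 2 * lambda_k Rp \<kappa>) / (2 * t)"
        using t by (simp add: field_simps)
      fix \<alpha> assume a: "\<alpha> \<in> Rp"
      have nz: "\<alpha> \<bullet> z \<noteq> 0" using z a unfolding regular_set_def by auto
      show "2 * dkHy2 \<kappa> w \<alpha> (\<alpha> \<bullet> z) + 2 * \<kappa> \<alpha> * (2 * dkHy1 \<kappa> w \<alpha> (\<alpha> \<bullet> z) / (\<alpha> \<bullet> z)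
        - (dkHy \<kappa> w \<alpha> (\<alpha> \<bullet> z) - dkHy \<kappa> w \<alpha> (- (\<alpha> \<bullet> z))) / (\<alpha> \<bullet> z) ^ 2)
        = 2 * ((\<alpha> \<bullet> w) / 2) ^ 2 * dkTh (\<kappa> \<alpha>) ((\<alpha> \<bullet> w) / 2 * (\<alpha> \<bullet> z))"
        unfolding dkHy_def dkHy1_def dkHy2_def
        using psi_eq[OF kpos[OF a] nz, of "(\<alpha> \<bullet> w) / 2"] by (simp add: mult.assoc)
    qed
    finally show "dunkl_laplacian_raw Rp \<kappa> (fgen C0 (1 / (4 * t)) w (dkHy \<kappa> w)) z = \<Psi> z" .
  next
    fix z
    have "isCont (\<lambda>z. dkTh (\<kappa> \<alpha>) ((\<alpha> \<bullet> w) / 2 * (\<alpha> \<bullet> z))) z" if a: "\<alpha> \<in> Rp" for \<alpha>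
      by (rule isCont_o2[OF _ isCont_dkTh[OF kpos[OF a]]]) (auto intro!: continuous_intros)
    then show "isCont \<Psi> z" unfolding \<Psi>_def by (auto intro!: continuous_intros)
  qed
  moreover have "\<Psi> x \<ge> - (real DIM('a) + 2 * lambda_k Rp \<kappa>) / (2 * t)"
    unfolding \<Psi>_def using dkTh_nonneg kpos by (auto intro!: sum_nonneg mult_nonneg_nonneg)
  moreover have "- (real DIM('a) + 2 * lambda_k Rp \<kappa>) / (2 * t) = - ((real DIM('a) + 2 * lambda_k Rp \<kappa>) / (2 * t))"
    using t by (simp add: field_simps)
  ultimately show ?thesis unfolding fe by linarith
qed

end

theorem theorem1p1:
  fixes R Rp :: "'a::euclidean_space set" and \<kappa> :: "'a \<Rightarrow> real"
  assumes "root_system R"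
    and "\<forall>\<alpha>\<in>R. (norm \<alpha>)\<^sup>2 = 2"
    and "positive_subsystem R Rp"
    and "multiplicity_function R \<kappa>"
    and "refl_group R \<cong> Z2_pow DIM('a)"
  shows "\<forall>t>0. \<forall>x y::'a.
    - dunkl_laplacian Rp \<kappa> (\<lambda>z. ln (dunkl_heat_kernel Rp \<kappa> t z y)) x
      \<le> (real DIM('a) + 2 * lambda_k Rp \<kappa>) / (2 * t)"
proof (intro allI impI)
  fix t :: real and x y :: 'a assume t: "t > 0"
  interpret osysR Rp \<kappa> R by (rule setup_osysR[OF assms])
  show "- dunkl_laplacian Rp \<kappa> (\<lambda>z. ln (dunkl_heat_kernel Rp \<kappa> t z y)) x
      \<le> (real DIM('a) + 2 * lambda_k Rp \<kappa>) / (2 * t)" by (rule main_bound[OF t])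
qed


end
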